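(* Let $G_n\sim \mathrm{CM}_n(\bar d^{(n)})$ satisfy the convergence assumption (CA) towards a limiting degree distribution $(p_k)_{k\ge0}$ with mean $0<\lambda<\infty$ and criticality parameter $0<\nu<1$, and suppose there exists $\gamma>0$ with $p_k=\mathcal{O}(e^{-\gamma k})$. Let $B_n$ be the number of vertices of $G_n$ that lie in connected components which are not trees. Then for every $0<\alpha<1$, $B_n=\mathcal{O}_{\mathbb{P}}(n^{\alpha})$.
   Context: Configuration model: given a degree sequence $\bar d^{(n)}=(d_1,\dots,d_n)\in\mathbb{N}_0^n$ (deterministic or i.i.d.), assign $d_v$ half-edges to vertex $v$ and pair all half-edges uniformly at random; matched pairs become edges (self-loops and multi-edges allowed; a component containing a self-loop or multi-edge is not a tree). Its law is $\mathrm{CM}_n(\bar d^{(n)})$. Let $D^{(n)}$ be the degree of a uniformly chosen vertex. Convergence assumption (CA): $D^{(n)}\to D$ in distribution and $\mathbb{E}((D^{(n)})^2)\to\mathbb{E}(D^2)<\infty$, where $D$ has law $(p_k)$. $\lambda=\mathbb{E}D$ and $\nu=\mathbb{E}(D(D-1))/\mathbb{E}(D)$. $X_n=\mathcal{O}_{\mathbb{P}}(f_n)$ means: for every $\epsilon>0$ there exist $M,N$ with $\mathbb{P}(|X_n/f_n|>M)<\epsilon$ for $n\ge N$. *)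

theory Defs
  imports "HOL-Probability.Probability" "HOL-Library.Landau_Symbols"
begin

definition half_edges :: "nat \<Rightarrow> (nat \<Rightarrow> nat) \<Rightarrow> (nat \<times> nat) set" where
  "half_edges n d = {(v,i). v < n \<and> i < d v}"

definition perfect_matchings :: "(nat \<times> nat) set \<Rightarrow> ((nat \<times> nat) \<Rightarrow> (nat \<times> nat)) set" where
  "perfect_matchings H = {m. (\<forall>h\<in>H. m h \<in> H \<and> m h \<noteq> h \<and> m (m h) = h) \<and> (\<forall>h. h \<notin> H \<longrightarrow> m h = h)}"

definition CM :: "nat \<Rightarrow> (nat \<Rightarrow> nat) \<Rightarrow> ((nat \<times> nat) \<Rightarrow> (nat \<times> nat)) pmf" where
  "CM n d = pmf_of_set (perfect_matchings (half_edges n d))"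

definition adj :: "nat \<Rightarrow> (nat \<Rightarrow> nat) \<Rightarrow> ((nat \<times> nat) \<Rightarrow> (nat \<times> nat)) \<Rightarrow> (nat \<times> nat) set" where
  "adj n d m = {(v,w). \<exists>i j. (v,i) \<in> half_edges n d \<and> m (v,i) = (w,j)}"

definition component :: "nat \<Rightarrow> (nat \<Rightarrow> nat) \<Rightarrow> ((nat \<times> nat) \<Rightarrow> (nat \<times> nat)) \<Rightarrow> nat \<Rightarrow> nat set" where
  "component n d m v = {w. (v,w) \<in> (adj n d m)\<^sup>*}"

text \<open>Edges with an endpoint in C (each edge = unordered pair of matched half-edges;
  self-loops and multi-edges counted separately).\<close>

definition edges_in :: "nat \<Rightarrow> (nat \<Rightarrow> nat) \<Rightarrow> ((nat \<times> nat) \<Rightarrow> (nat \<times> nat)) \<Rightarrow> nat set \<Rightarrow> (nat \<times> nat) set set" where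
  "edges_in n d m C = {{h, m h} | h. h \<in> half_edges n d \<and> fst h \<in> C}"

text \<open>A connected component of a multigraph is a tree iff it has exactly |C| - 1 edges
  (a self-loop or a multi-edge forces more edges).\<close>

definition is_tree_component :: "nat \<Rightarrow> (nat \<Rightarrow> nat) \<Rightarrow> ((nat \<times> nat) \<Rightarrow> (nat \<times> nat)) \<Rightarrow> nat set \<Rightarrow> bool" where
  "is_tree_component n d m C \<longleftrightarrow> card (edges_in n d m C) + 1 = card C"

definition B :: "nat \<Rightarrow> (nat \<Rightarrow> nat) \<Rightarrow> ((nat \<times> nat) \<Rightarrow> (nat \<times> nat)) \<Rightarrow> nat" where
  "B n d m = card {v. v < n \<and> \<not> is_tree_component n d m (component n d m v)}"

end

theory Submission
  imports Defs
begin


fun gg :: "nat \<Rightarrow> nat" where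
  "gg 0 = 1" | "gg (Suc 0) = 0" | "gg (Suc (Suc k)) = Suc k * gg k"

lemma pm_finite:
  assumes "finite H" shows "finite (perfect_matchings H)"
proof -
  have inj: "inj_on (\<lambda>m. restrict m H) (perfect_matchings H)"
  proof (rule inj_onI)
    fix m m' assume m: "m \<in> perfect_matchings H" and m': "m' \<in> perfect_matchings H"
      and eq: "restrict m H = restrict m' H"
    show "m = m'"
    proof
      fix x show "m x = m' x"
      proof (cases "x \<in> H")
        case True then show ?thesis using fun_cong[OF eq, of x] by simp
      next
        case False
        have "m x = x" "m' x = x" using m m' False unfolding perfect_matchings_def by blast+
        then show ?thesis by simp
      qed
    qed
  qed
  have sub: "(\<lambda>m. restrict m H) ` perfect_matchings H \<subseteq> PiE H (\<lambda>_. H)"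
    by (auto simp: perfect_matchings_def)
  have fin: "finite (PiE H (\<lambda>_. H))" using assms by (simp add: finite_PiE)
  have "finite ((\<lambda>m. restrict m H) ` perfect_matchings H)" by (rule finite_subset[OF sub fin])
  then show ?thesis by (rule finite_imageD[OF _ inj])
qed

lemma pmD: "m \<in> perfect_matchings H \<Longrightarrow> h \<in> H \<Longrightarrow> m h \<in> H"
  "m \<in> perfect_matchings H \<Longrightarrow> h \<in> H \<Longrightarrow> m h \<noteq> h"
  "m \<in> perfect_matchings H \<Longrightarrow> h \<in> H \<Longrightarrow> m (m h) = h"
  "m \<in> perfect_matchings H \<Longrightarrow> h \<notin> H \<Longrightarrow> m h = h"
  unfolding perfect_matchings_def by blast+

lemma pmI: "(\<And>h. h \<in> H \<Longrightarrow> m h \<in> H \<and> m h \<noteq> h \<and> m (m h) = h) \<Longrightarrow> (\<And>h. h \<notin> H \<Longrightarrow> m h = h)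
   \<Longrightarrow> m \<in> perfect_matchings H"
  unfolding perfect_matchings_def by blast

lemma pm_fix_card:
  assumes "a \<in> H" "b \<in> H" "a \<noteq> b"
    and Q: "\<And>m m'. (\<And>x. x \<noteq> a \<Longrightarrow> x \<noteq> b \<Longrightarrow> m x = m' x) \<Longrightarrow> Q m = Q m'"
  shows "card {m \<in> perfect_matchings H. m a = b \<and> Q m} = card {m \<in> perfect_matchings (H - {a,b}). Q m}"
proof (rule bij_betw_same_card[of "\<lambda>m. m(a:=a, b:=b)"], rule bij_betwI[where g = "\<lambda>m. m(a:=b, b:=a)"])
  show "(\<lambda>m. m(a:=a, b:=b)) \<in> {m \<in> perfect_matchings H. m a = b \<and> Q m} \<rightarrow> {m \<in> perfect_matchings (H - {a,b}). Q m}"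
  proof
    fix m assume m: "m \<in> {m \<in> perfect_matchings H. m a = b \<and> Q m}"
    then have pm: "m \<in> perfect_matchings H" and ma: "m a = b" and q: "Q m" by blast+
    have mb: "m b = a" using pmD(3)[OF pm assms(1)] ma by simp
    have "Q (m(a:=a, b:=b)) = Q m" by (rule Q) simp
    with q have "Q (m(a:=a, b:=b))" by simp
    moreover have "m(a:=a, b:=b) \<in> perfect_matchings (H - {a,b})"
    proof (rule pmI)
      fix h assume h: "h \<in> H - {a,b}"
      then have h': "h \<in> H" "h \<noteq> a" "h \<noteq> b" by blast+
      have mmh: "m (m h) = h" using pmD(3)[OF pm h'(1)] .
      have "m h \<noteq> a"
      proof
        assume "m h = a" then have "m (m h) = b" using ma by simp
        then show False using mmh h' by simp
      qed
      moreover have "m h \<noteq> b"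
      proof
        assume "m h = b" then have "m (m h) = a" using mb by simp
        then show False using mmh h' by simp
      qed
      ultimately show "(m(a:=a, b:=b)) h \<in> H - {a,b} \<and> (m(a:=a, b:=b)) h \<noteq> h \<and> (m(a:=a, b:=b)) ((m(a:=a, b:=b)) h) = h"
        using h' pmD(1,2,3)[OF pm h'(1)] by simp
    next
      fix h assume h: "h \<notin> H - {a,b}"
      show "(m(a:=a, b:=b)) h = h"
      proof (cases "h = a \<or> h = b")
        case False then show ?thesis using h pmD(4)[OF pm, of h] by simp
      next
        case True then show ?thesis using assms(3) by (elim disjE) simp_all
      qed
    qed
    ultimately show "m(a:=a, b:=b) \<in> {m \<in> perfect_matchings (H - {a,b}). Q m}" by simp
  qed
  show "(\<lambda>m. m(a:=b, b:=a)) \<in> {m \<in> perfect_matchings (H - {a,b}). Q m} \<rightarrow> {m \<in> perfect_matchings H. m a = b \<and> Q m}"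
  proof
    fix m assume m: "m \<in> {m \<in> perfect_matchings (H - {a,b}). Q m}"
    then have pm: "m \<in> perfect_matchings (H - {a,b})" and q: "Q m" by blast+
    have "Q (m(a:=b, b:=a)) = Q m" by (rule Q) simp
    with q have "Q (m(a:=b, b:=a))" by simp
    moreover have "m(a:=b, b:=a) \<in> perfect_matchings H"
    proof (rule pmI)
      fix h assume h: "h \<in> H"
      show "(m(a:=b, b:=a)) h \<in> H \<and> (m(a:=b, b:=a)) h \<noteq> h \<and> (m(a:=b, b:=a)) ((m(a:=b, b:=a)) h) = h"
      proof (cases "h = a \<or> h = b")
        case True then show ?thesis using assms(1,2,3) by (elim disjE) simp_all
      next
        case False
        then have h': "h \<in> H - {a,b}" using h by blast
        have "m h \<in> H - {a,b}" "m h \<noteq> h" "m (m h) = h" using pmD(1,2,3)[OF pm h'] by blast+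
        then show ?thesis using False by simp
      qed
    next
      fix h assume h: "h \<notin> H"
      then have "h \<noteq> a" "h \<noteq> b" "h \<notin> H - {a,b}" using assms(1,2,3) by blast+
      then show "(m(a:=b, b:=a)) h = h" using pmD(4)[OF pm, of h] by simp
    qed
    ultimately show "m(a:=b, b:=a) \<in> {m \<in> perfect_matchings H. m a = b \<and> Q m}" using assms(1,2,3) by simp
  qed
  show "m(a:=a, b:=b, a:=b, b:=a) = m" if "m \<in> {m \<in> perfect_matchings H. m a = b \<and> Q m}" for m
  proof -
    have pm: "m \<in> perfect_matchings H" and ma: "m a = b" using that by blast+
    have mb: "m b = a" using pmD(3)[OF pm assms(1)] ma by simp
    show ?thesis
    proof
      fix x show "(m(a:=a, b:=b, a:=b, b:=a)) x = m x"
        unfolding fun_upd_apply using ma mb by (cases "x = a"; cases "x = b") simp_all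
    qed
  qed
  show "m(a:=b, b:=a, a:=a, b:=b) = m" if "m \<in> {m \<in> perfect_matchings (H - {a,b}). Q m}" for m
  proof -
    have pm: "m \<in> perfect_matchings (H - {a,b})" using that by blast
    have "a \<notin> H - {a,b}" "b \<notin> H - {a,b}" by blast+
    then have ma: "m a = a" and mb: "m b = b" using pmD(4)[OF pm] by blast+
    show ?thesis
    proof
      fix x show "(m(a:=b, b:=a, a:=a, b:=b)) x = m x"
        unfolding fun_upd_apply using ma mb by (cases "x = a"; cases "x = b") simp_all
    qed
  qed
qed

lemma pm_fix_card1:
  assumes "a \<in> H" "b \<in> H" "a \<noteq> b"
  shows "card {m \<in> perfect_matchings H. m a = b} = card (perfect_matchings (H - {a,b}))"
  using pm_fix_card[OF assms, of "\<lambda>_. True"] by simp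

lemma pm_card: "finite H \<Longrightarrow> card (perfect_matchings H) = gg (card H)"
proof (induction "card H" arbitrary: H rule: less_induct)
  case less
  show ?case
  proof (cases "H = {}")
    case True
    have "m \<in> perfect_matchings {} \<longleftrightarrow> m = id" for m
    proof
      assume "m \<in> perfect_matchings {}"
      then have "m h = h" for h using pmD(4)[of m "{}" h] by blast
      then show "m = id" by (simp add: fun_eq_iff)
    next
      assume "m = id" then show "m \<in> perfect_matchings {}" by (intro pmI) simp_all
    qed
    then have "perfect_matchings H = {id}" using True by blast
    then show ?thesis using True by simp
  next
    case False
    then obtain a where a: "a \<in> H" by blast
    have part: "perfect_matchings H = (\<Union>b\<in>H - {a}. {m \<in> perfect_matchings H. m a = b})"
    proof
      show "perfect_matchings H \<subseteq> (\<Union>b\<in>H - {a}. {m \<in> perfect_matchings H. m a = b})"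
      proof
        fix m assume m: "m \<in> perfect_matchings H"
        then have "m a \<in> H - {a}" using a pmD(1,2)[OF m a] by blast
        then show "m \<in> (\<Union>b\<in>H - {a}. {m \<in> perfect_matchings H. m a = b})" using m by blast
      qed
    qed blast
    have each: "card {m \<in> perfect_matchings H. m a = b} = gg (card H - 2)" if b: "b \<in> H - {a}" for b
    proof -
      have bH: "b \<in> H" and ba: "a \<noteq> b" using b by blast+
      have c2: "card (H - {a,b}) = card H - 2" using a bH ba less.prems by (simp add: card_Diff_subset_Int)
      have pos: "card H \<ge> 2"
      proof -
        have "{a,b} \<subseteq> H" using a bH by blast
        then have "card {a,b} \<le> card H" using less.prems by (rule card_mono[rotated])
        then show ?thesis using ba by simp
      qed
      have lt: "card (H - {a,b}) < card H" using c2 pos by simp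
      have "card {m \<in> perfect_matchings H. m a = b} = card (perfect_matchings (H - {a,b}))"
        by (rule pm_fix_card1[OF a bH ba])
      also have "\<dots> = gg (card (H - {a,b}))"
        using less.hyps[OF lt] less.prems by simp
      also have "card (H - {a,b}) = card H - 2" by (rule c2)
      finally show ?thesis .
    qed
    have "card (perfect_matchings H) = (\<Sum>b\<in>H - {a}. card {m \<in> perfect_matchings H. m a = b})"
    proof -
      have "card (\<Union>b\<in>H - {a}. {m \<in> perfect_matchings H. m a = b}) = (\<Sum>b\<in>H - {a}. card {m \<in> perfect_matchings H. m a = b})"
      proof (rule card_UN_disjoint)
        show "finite (H - {a})" using less.prems by simp
        show "\<forall>i\<in>H - {a}. finite {m \<in> perfect_matchings H. m a = i}"
        proof
          fix i show "finite {m \<in> perfect_matchings H. m a = i}"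
            by (rule finite_subset[OF _ pm_finite[OF less.prems]]) blast
        qed
        show "\<forall>i\<in>H - {a}. \<forall>j\<in>H - {a}. i \<noteq> j \<longrightarrow> {m \<in> perfect_matchings H. m a = i} \<inter> {m \<in> perfect_matchings H. m a = j} = {}"
          by blast
      qed
      moreover have "card (perfect_matchings H) = card (\<Union>b\<in>H - {a}. {m \<in> perfect_matchings H. m a = b})"
        by (rule arg_cong[OF part])
      ultimately show ?thesis by (rule trans[rotated])
    qed
    also have "\<dots> = (\<Sum>b\<in>H - {a}. gg (card H - 2))" using each by (rule sum.cong[OF refl])
    also have "\<dots> = (card H - 1) * gg (card H - 2)" using a less.prems by simp
    also have "\<dots> = gg (card H)"
    proof (cases "card H")
      case 0 then show ?thesis using a less.prems by simp
    next
      case (Suc k) then show ?thesis by (cases k) auto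
    qed
    finally show ?thesis .
  qed
qed




definition hes :: "((nat\<times>nat)\<times>(nat\<times>nat)) list \<Rightarrow> (nat\<times>nat) list" where
  "hes P = concat (map (\<lambda>(x,y). [x,y]) P)"

lemma hes_simps[simp]: "hes [] = []" "hes ((x,y)#P) = x # y # hes P" "hes (P @ Q) = hes P @ hes Q"
  by (simp_all add: hes_def)

lemma length_hes[simp]: "length (hes P) = 2 * length P"
  by (induction P) (auto simp: hes_def)

lemma set_hes: "(x,y) \<in> set P \<Longrightarrow> x \<in> set (hes P) \<and> y \<in> set (hes P)"
  by (induction P) (auto simp: hes_def)

definition mp :: "((nat\<times>nat) \<Rightarrow> (nat\<times>nat)) \<Rightarrow> ((nat\<times>nat)\<times>(nat\<times>nat)) list \<Rightarrow> bool" where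
  "mp m P \<longleftrightarrow> (\<forall>q\<in>set P. m (fst q) = snd q)"

lemma pairs_card:
  assumes "finite H" "distinct (hes P)" "set (hes P) \<subseteq> H"
  shows "card {m \<in> perfect_matchings H. mp m P} = gg (card H - 2 * length P)"
  using assms
proof (induction P arbitrary: H)
  case Nil
  then show ?case using pm_card[OF Nil(1)] by (simp add: mp_def)
next
  case (Cons q P)
  obtain a b where q: "q = (a,b)" by (cases q)
  have ab: "a \<noteq> b" "a \<notin> set (hes P)" "b \<notin> set (hes P)" "distinct (hes P)"
    using Cons.prems(2) q by auto
  have aH: "a \<in> H" "b \<in> H" "set (hes P) \<subseteq> H" using Cons.prems(3) q by auto
  have eq: "{m \<in> perfect_matchings H. mp m (q#P)} = {m \<in> perfect_matchings H. m a = b \<and> mp m P}"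
    using q by (auto simp: mp_def)
  have Qc: "mp m P = mp m' P" if "\<And>x. x \<noteq> a \<Longrightarrow> x \<noteq> b \<Longrightarrow> m x = m' x" for m m'
  proof -
    have "m (fst r) = m' (fst r)" if "r \<in> set P" for r
    proof -
      have "fst r \<in> set (hes P)" using set_hes[of "fst r" "snd r" P] that by simp
      then show ?thesis using ab \<open>\<And>x. x \<noteq> a \<Longrightarrow> x \<noteq> b \<Longrightarrow> m x = m' x\<close> by metis
    qed
    then show ?thesis unfolding mp_def by simp
  qed
  have "card {m \<in> perfect_matchings H. m a = b \<and> mp m P} = card {m \<in> perfect_matchings (H - {a,b}). mp m P}"
    by (rule pm_fix_card[OF aH(1,2) ab(1)]) (rule Qc)
  also have "\<dots> = gg (card (H - {a,b}) - 2 * length P)"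
    by (rule Cons.IH) (use Cons.prems ab aH in auto)
  also have "card (H - {a,b}) = card H - 2" using aH ab Cons.prems(1) by (simp add: card_Diff_subset_Int)
  finally show ?case using eq by simp
qed

lemma gg_even_pos: "even k \<Longrightarrow> gg k > 0"
  by (induction k rule: gg.induct) auto

lemma gg_step: "k \<ge> 2 \<Longrightarrow> gg k = (k - 1) * gg (k - 2)"
proof -
  assume "k \<ge> 2" then obtain j where "k = Suc (Suc j)" by (metis add_2_eq_Suc le_Suc_ex)
  then show ?thesis by simp
qed

lemma gg_ratio_bound:
  fixes l F :: nat and \<rho> :: real
  assumes ev: "even l" and kl: "2 * (k + 1) \<le> l" and rho: "0 \<le> \<rho>" "\<rho> \<le> 1"
    and F: "real F \<le> \<rho> * (real l - 3)"
  shows "real (gg (l - 2 * (k + 1))) / real (gg l) * (\<Prod>i<k. real (F - 2 * i)) \<le> \<rho> ^ k / (real l - 1)"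
  using kl
proof (induction k)
  case 0
  have "gg l = (l - 1) * gg (l - 2)" using 0 by (intro gg_step) simp
  moreover have "gg (l - 2) > 0" using ev by (intro gg_even_pos) simp
  moreover have "l \<ge> 2" using 0 by simp
  ultimately show ?case by (simp add: of_nat_diff)
next
  case (Suc k)
  have kl': "2 * (k + 1) \<le> l" using Suc.prems by simp
  have IH: "real (gg (l - 2 * (k + 1))) / real (gg l) * (\<Prod>i<k. real (F - 2 * i)) \<le> \<rho> ^ k / (real l - 1)"
    using Suc.IH[OF kl'] .
  have st: "gg (l - 2 * (k + 1)) = (l - 2 * k - 3) * gg (l - 2 * (Suc k + 1))"
  proof -
    have "gg (l - 2 * (k + 1)) = (l - 2 * (k + 1) - 1) * gg (l - 2 * (k + 1) - 2)"
      using Suc.prems by (intro gg_step) simp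
    moreover have "l - 2 * (k + 1) - 2 = l - 2 * (Suc k + 1)" by simp
    moreover have "l - 2 * (k + 1) - 1 = l - 2 * k - 3" by simp
    ultimately show ?thesis by simp
  qed
  have pos: "real (l - 2 * k - 3) > 0" using Suc.prems ev by simp
  have rl: "real (l - 2 * k - 3) = real l - 2 * real k - 3" using Suc.prems by (simp add: of_nat_diff)
  have fac: "real (F - 2 * k) \<le> \<rho> * real (l - 2 * k - 3)"
  proof (cases "2 * k \<le> F")
    case True
    then have "real (F - 2 * k) = real F - 2 * real k" by (simp add: of_nat_diff)
    also have "\<dots> \<le> \<rho> * (real l - 3) - 2 * real k" using F by simp
    also have "\<dots> \<le> \<rho> * (real l - 3) - 2 * real k * \<rho>" using rho by (simp add: mult_left_le)
    also have "\<dots> = \<rho> * real (l - 2 * k - 3)" using rl by (simp add: algebra_simps)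
    finally show ?thesis .
  next
    case False then show ?thesis using rho pos by simp
  qed
  have gl: "real (gg l) > 0" using gg_even_pos[OF ev] by simp
  have "real (gg (l - 2 * (Suc k + 1))) / real (gg l) * (\<Prod>i<Suc k. real (F - 2 * i))
      = (real (gg (l - 2 * (k + 1))) / real (gg l) * (\<Prod>i<k. real (F - 2 * i))) * (real (F - 2 * k) / real (l - 2 * k - 3))"
  proof -
    define G where "G = real (gg (l - 2 * (Suc k + 1)))"
    define c where "c = real (l - 2 * k - 3)"
    define Pk where "Pk = (\<Prod>i<k. real (F - 2 * i))"
    have g': "real (gg (l - 2 * (k + 1))) = c * G" unfolding c_def G_def using st by simp
    have "(\<Prod>i<Suc k. real (F - 2 * i)) = Pk * real (F - 2 * k)" unfolding Pk_def by simp
    moreover have "c \<noteq> 0" using pos c_def by simp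
    moreover have "\<And>G gl Pk f c::real. c \<noteq> 0 \<Longrightarrow> G / gl * (Pk * f) = (c * G / gl * Pk) * (f / c)"
      by (simp add: field_simps)
    ultimately show ?thesis unfolding g' G_def[symmetric] Pk_def[symmetric] c_def[symmetric] by metis
  qed
  also have "\<dots> \<le> (\<rho> ^ k / (real l - 1)) * \<rho>"
  proof (rule mult_mono[OF IH])
    show "real (F - 2 * k) / real (l - 2 * k - 3) \<le> \<rho>" using fac pos by (simp add: divide_le_eq)
    show "0 \<le> \<rho> ^ k / (real l - 1)" using rho Suc.prems by simp
    show "0 \<le> real (F - 2 * k) / real (l - 2 * k - 3)" by simp
  qed
  also have "\<dots> = \<rho> ^ Suc k / (real l - 1)" by simp
  finally show ?case .
qed




lemma half_edges_Sigma: "half_edges n d = Sigma {..<n} (\<lambda>v. {..<d v})"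
  unfolding half_edges_def by auto

lemma half_edges_finite: "finite (half_edges n d)"
  unfolding half_edges_Sigma by simp

lemma half_edges_card: "card (half_edges n d) = (\<Sum>v<n. d v)"
  unfolding half_edges_Sigma by (simp add: card_SigmaI)

lemma half_edges_mem: "h \<in> half_edges n d \<longleftrightarrow> fst h < n \<and> snd h < d (fst h)"
  unfolding half_edges_def by (cases h) simp

inductive opath :: "nat \<Rightarrow> (nat \<Rightarrow> nat) \<Rightarrow> nat \<Rightarrow> ((nat\<times>nat)\<times>(nat\<times>nat)) list \<Rightarrow> (nat\<times>nat) \<Rightarrow> nat set \<Rightarrow> bool"
  for n d where
  base: "a \<in> half_edges n d \<Longrightarrow> opath n d (fst a) [] a {fst a}"
| step: "opath n d w E a U \<Longrightarrow> b \<in> half_edges n d \<Longrightarrow> a' \<in> half_edges n d \<Longrightarrow> fst b = fst a'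
     \<Longrightarrow> b \<noteq> a' \<Longrightarrow> fst b \<notin> U \<Longrightarrow> opath n d w (E @ [(a,b)]) a' (insert (fst b) U)"

definition fdeg :: "(nat \<Rightarrow> nat) \<Rightarrow> nat \<Rightarrow> nat" where "fdeg d v = d v * (d v - 1)"

lemma opath_inv:
  assumes "opath n d w E a U"
  shows "distinct (hes E @ [a]) \<and> set (hes E @ [a]) \<subseteq> half_edges n d \<and> (\<forall>h\<in>set (hes E @ [a]). fst h \<in> U)
    \<and> U \<subseteq> {..<n} \<and> finite U \<and> card U = length E + 1 \<and> w \<in> U \<and> 2 * length E \<le> (\<Sum>u\<in>U. fdeg d u) \<and> fst a \<in> U"
  using assms
proof (induction rule: opath.induct)
  case (base a)
  then show ?case by (auto simp: half_edges_mem)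
next
  case (step w E a U b a')
  have IH: "distinct (hes E @ [a])" "set (hes E @ [a]) \<subseteq> half_edges n d" "\<forall>h\<in>set (hes E @ [a]). fst h \<in> U"
    "U \<subseteq> {..<n}" "finite U" "card U = length E + 1" "w \<in> U" "2 * length E \<le> (\<Sum>u\<in>U. fdeg d u)" "fst a \<in> U"
    using step.IH by blast+
  have bn: "b \<notin> set (hes E @ [a])" using IH(3) step.hyps(6) by blast
  have an: "a' \<notin> set (hes E @ [a])" using IH(3) step.hyps(6) step.hyps(4) by metis
  have d1: "distinct (hes (E @ [(a, b)]) @ [a'])"
    using IH(1) bn an step.hyps(5) by auto
  have fb: "fst b < n" using step.hyps(2) by (simp add: half_edges_mem)
  have f2: "fdeg d (fst b) \<ge> 2"
  proof -
    have "snd b < d (fst b)" "snd a' < d (fst b)" using step.hyps(2,3,4) by (simp_all add: half_edges_mem)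
    moreover have "snd b \<noteq> snd a'" using step.hyps(4,5) by (simp add: prod_eq_iff)
    ultimately have d2: "d (fst b) \<ge> 2" by linarith
    then have "1 \<le> d (fst b) - 1" by simp
    from mult_le_mono[OF d2 this] show ?thesis unfolding fdeg_def by simp
  qed
  have s: "(\<Sum>u\<in>insert (fst b) U. fdeg d u) = fdeg d (fst b) + (\<Sum>u\<in>U. fdeg d u)"
    using IH(5) step.hyps(6) by simp
  show ?case
  proof (intro conjI)
    show "distinct (hes (E @ [(a, b)]) @ [a'])" by (rule d1)
    show "set (hes (E @ [(a, b)]) @ [a']) \<subseteq> half_edges n d" using IH(2) step.hyps(2,3) by auto
    show "\<forall>h\<in>set (hes (E @ [(a, b)]) @ [a']). fst h \<in> insert (fst b) U" using IH(3) IH(9) step.hyps(4) by auto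
    show "insert (fst b) U \<subseteq> {..<n}" using IH(4) fb by auto
    show "finite (insert (fst b) U)" using IH(5) by simp
    show "card (insert (fst b) U) = length (E @ [(a, b)]) + 1" using IH(5,6) step.hyps(6) by simp
    show "w \<in> insert (fst b) U" using IH(7) by simp
    show "2 * length (E @ [(a, b)]) \<le> (\<Sum>u\<in>insert (fst b) U. fdeg d u)" using s IH(8) f2 by simp
    show "fst a' \<in> insert (fst b) U" using step.hyps(4) by simp
  qed
qed

lemma opath_suffix:
  assumes "opath n d w E a U" "u \<in> U"
  shows "\<exists>E2 U2. opath n d u E2 a U2 \<and> set E2 \<subseteq> set E \<and> U2 \<subseteq> U"
  using assms
proof (induction arbitrary: u rule: opath.induct)
  case (base a)
  then show ?case using opath.base[OF base.hyps] by auto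
next
  case (step w E a U b a')
  show ?case
  proof (cases "u = fst b")
    case True
    have "opath n d (fst a') [] a' {fst a'}" by (rule opath.base[OF step.hyps(3)])
    then show ?thesis using True step.hyps(4) by (intro exI[of _ "[]"] exI[of _ "{fst a'}"]) auto
  next
    case False
    then have "u \<in> U" using step.prems by simp
    then obtain E2 U2 where o: "opath n d u E2 a U2" "set E2 \<subseteq> set E" "U2 \<subseteq> U" using step.IH by blast
    have "opath n d u (E2 @ [(a,b)]) a' (insert (fst b) U2)"
      using opath.step[OF o(1) step.hyps(2,3,4,5)] o(3) step.hyps(6) by blast
    then show ?thesis using o by (intro exI[of _ "E2 @ [(a,b)]"] exI[of _ "insert (fst b) U2"]) auto
  qed
qed

lemma hes_mem: "x \<in> set (hes E) \<Longrightarrow> \<exists>q\<in>set E. x = fst q \<or> x = snd q"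
proof (induction E)
  case (Cons q E)
  obtain y z where "q = (y,z)" by (cases q)
  then show ?case using Cons by auto
qed simp

lemma opath_close:
  assumes o: "opath n d w E a U" and m: "m \<in> perfect_matchings (half_edges n d)" and mpE: "mp m E"
  shows "m a \<notin> set (hes E @ [a])"
proof
  assume c: "m a \<in> set (hes E @ [a])"
  have inv: "distinct (hes E @ [a])" "set (hes E @ [a]) \<subseteq> half_edges n d" using opath_inv[OF o] by blast+
  have aH: "a \<in> half_edges n d" using inv(2) by simp
  have ana: "a \<notin> set (hes E)" using inv(1) by simp
  have mma: "m (m a) = a" using pmD(3)[OF m aH] .
  have "m a \<noteq> a" using pmD(2)[OF m aH] .
  then have "m a \<in> set (hes E)" using c by simp
  then obtain q where q: "q \<in> set E" "m a = fst q \<or> m a = snd q"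
    using hes_mem by blast
  have mq: "m (fst q) = snd q" using mpE q(1) unfolding mp_def by blast
  have fq: "fst q \<in> set (hes E)" "snd q \<in> set (hes E)" using set_hes[of "fst q" "snd q" E] q(1) by auto
  from q(2) show False
  proof
    assume "m a = fst q"
    then have "snd q = a" using mq mma by simp
    then show False using fq ana by simp
  next
    assume h: "m a = snd q"
    have fqH: "fst q \<in> half_edges n d" using fq inv(2) by auto
    have "m (m (fst q)) = fst q" using pmD(3)[OF m fqH] .
    then have "fst q = a" using h mq mma by simp
    then show False using fq ana by simp
  qed
qed




definition OS :: "nat \<Rightarrow> (nat \<Rightarrow> nat) \<Rightarrow> nat \<Rightarrow> nat \<Rightarrow> (((nat\<times>nat)\<times>(nat\<times>nat)) list \<times> (nat\<times>nat) \<times> nat set) set" where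
  "OS n d w k = {(E,a,U). opath n d w E a U \<and> length E = k}"

definition Ext :: "nat \<Rightarrow> (nat \<Rightarrow> nat) \<Rightarrow> nat set \<Rightarrow> ((nat\<times>nat)\<times>(nat\<times>nat)) set" where
  "Ext n d U = {(b,a'). b \<in> half_edges n d \<and> a' \<in> half_edges n d \<and> fst b = fst a' \<and> b \<noteq> a' \<and> fst b \<notin> U}"

lemma OS_finite: "finite (OS n d w k)"
proof -
  let ?H = "half_edges n d"
  have "OS n d w k \<subseteq> {E. set E \<subseteq> ?H \<times> ?H \<and> length E = k} \<times> ?H \<times> Pow {..<n}"
  proof
    fix x assume x: "x \<in> OS n d w k"
    obtain E a U where xe: "x = (E,a,U)" by (cases x)
    have o: "opath n d w E a U" "length E = k" using x xe unfolding OS_def by auto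
    have inv: "set (hes E @ [a]) \<subseteq> ?H" "U \<subseteq> {..<n}" using opath_inv[OF o(1)] by blast+
    have "set E \<subseteq> ?H \<times> ?H"
    proof
      fix q assume "q \<in> set E"
      then have "fst q \<in> set (hes E)" "snd q \<in> set (hes E)" using set_hes[of "fst q" "snd q" E] by auto
      then show "q \<in> ?H \<times> ?H" using inv(1) by (cases q) auto
    qed
    then show "x \<in> {E. set E \<subseteq> ?H \<times> ?H \<and> length E = k} \<times> ?H \<times> Pow {..<n}"
      using xe o inv by auto
  qed
  moreover have "finite ({E. set E \<subseteq> ?H \<times> ?H \<and> length E = k} \<times> ?H \<times> Pow {..<n})"
    using half_edges_finite by (intro finite_cartesian_product finite_lists_length_eq) auto
  ultimately show ?thesis by (rule finite_subset)
qed

lemma card_offdiag: "card {(i,j). i < k \<and> j < (k::nat) \<and> i \<noteq> j} = k * (k - 1)"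
proof -
  have e: "{(i,j). i < k \<and> j < (k::nat) \<and> i \<noteq> j} = {..<k} \<times> {..<k} - (\<lambda>i. (i,i)) ` {..<k}" by auto
  have "card ((\<lambda>i. (i,i)) ` {..<k}) = k" by (subst card_image) (auto simp: inj_on_def)
  then have "card ({..<k} \<times> {..<k} - (\<lambda>i. (i,i)) ` {..<k}) = k * k - k"
    by (subst card_Diff_subset) auto
  then show ?thesis unfolding e by (simp add: diff_mult_distrib2)
qed

lemma Ext_card: "card (Ext n d U) \<le> (\<Sum>x\<in>{..<n} - U. fdeg d x)"
proof -
  let ?S = "SIGMA x:{..<n} - U. {(i,j). i < d x \<and> j < d x \<and> i \<noteq> j}"
  have sub: "Ext n d U \<subseteq> (\<lambda>(x,i,j). ((x,i),(x,j))) ` ?S"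
  proof
    fix q assume q: "q \<in> Ext n d U"
    obtain b a where qe: "q = (b,a)" by (cases q)
    obtain x i where b: "b = (x,i)" by (cases b)
    obtain y j where a: "a = (y,j)" by (cases a)
    have "x = y" "x < n" "i < d x" "j < d x" "i \<noteq> j" "x \<notin> U"
      using q unfolding qe b a Ext_def half_edges_def by auto
    then show "q \<in> (\<lambda>(x,i,j). ((x,i),(x,j))) ` ?S" unfolding qe b a
      by (intro image_eqI[of _ _ "(x,i,j)"]) auto
  qed
  have fin: "finite ?S" by (intro finite_SigmaI) (auto intro: finite_subset[of _ "{..<d _} \<times> {..<d _}"])
  have "card (Ext n d U) \<le> card ((\<lambda>(x,i,j). ((x,i),(x,j))) ` ?S)"
    by (rule card_mono[OF finite_imageI[OF fin] sub])
  also have "\<dots> \<le> card ?S" by (rule card_image_le[OF fin])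
  also have "\<dots> = (\<Sum>x\<in>{..<n} - U. card {(i,j). i < d x \<and> j < d x \<and> i \<noteq> j})"
    by (rule card_SigmaI) (auto intro: finite_subset[of _ "{..<d _} \<times> {..<d _}"])
  also have "\<dots> = (\<Sum>x\<in>{..<n} - U. fdeg d x)" by (simp add: card_offdiag fdeg_def)
  finally show ?thesis .
qed

lemma OS_0: "card (OS n d w 0) \<le> d w"
proof -
  have sub: "OS n d w 0 \<subseteq> (\<lambda>a. ([], a, {fst a})) ` ({w} \<times> {..<d w})"
  proof
    fix x assume x: "x \<in> OS n d w 0"
    obtain E a U where xe: "x = (E,a,U)" by (cases x)
    have o: "opath n d w E a U" "E = []" using x xe unfolding OS_def by auto
    from o(1) have "w = fst a \<and> U = {fst a} \<and> a \<in> half_edges n d"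
    proof (cases rule: opath.cases)
      case (base) then show ?thesis by simp
    next
      case (step E a U b) then show ?thesis using o(2) by simp
    qed
    then show "x \<in> (\<lambda>a. ([], a, {fst a})) ` ({w} \<times> {..<d w})"
      using xe o(2) by (cases a) (auto simp: half_edges_def)
  qed
  have "card (OS n d w 0) \<le> card ({w} \<times> {..<d w})"
    by (rule le_trans[OF card_mono[OF _ sub] card_image_le]) simp_all
  then show ?thesis by simp
qed

lemma OS_Suc:
  "card (OS n d w (Suc k)) \<le> card (OS n d w k) * ((\<Sum>v<n. fdeg d v) - 2 * k)"
proof -
  let ?F = "\<Sum>v<n. fdeg d v"
  let ?f = "\<lambda>((E,a,U),(b,a')). (E @ [(a,b)], a', insert (fst b) U)"
  let ?S = "SIGMA x:OS n d w k. Ext n d (snd (snd x))"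
  have sub: "OS n d w (Suc k) \<subseteq> ?f ` ?S"
  proof
    fix x assume x: "x \<in> OS n d w (Suc k)"
    obtain E a U where xe: "x = (E,a,U)" by (cases x)
    have o: "opath n d w E a U" "length E = Suc k" using x xe unfolding OS_def by auto
    from o(1) show "x \<in> ?f ` ?S"
    proof (cases rule: opath.cases)
      case base then show ?thesis using o(2) by simp
    next
      case (step E0 a0 U0 b)
      have "(E0, a0, U0) \<in> OS n d w k" using step o(2) unfolding OS_def by simp
      moreover have "(b, a) \<in> Ext n d U0" using step unfolding Ext_def by simp
      ultimately have "((E0,a0,U0),(b,a)) \<in> ?S" by simp
      moreover have "x = ?f ((E0,a0,U0),(b,a))" using xe step by simp
      ultimately show ?thesis by blast
    qed
  qed
  have finE: "finite (Ext n d U)" for U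
    unfolding Ext_def by (rule finite_subset[of _ "half_edges n d \<times> half_edges n d"]) (auto simp: half_edges_finite)
  have fin: "finite ?S" using OS_finite finE by (intro finite_SigmaI) auto
  have each: "card (Ext n d (snd (snd x))) \<le> ?F - 2 * k" if x: "x \<in> OS n d w k" for x
  proof -
    obtain E a U where xe: "x = (E,a,U)" by (cases x)
    have o: "opath n d w E a U" "length E = k" using x xe unfolding OS_def by auto
    have inv: "U \<subseteq> {..<n}" "finite U" "2 * length E \<le> (\<Sum>u\<in>U. fdeg d u)" using opath_inv[OF o(1)] by blast+
    have "card (Ext n d U) \<le> (\<Sum>x\<in>{..<n} - U. fdeg d x)" by (rule Ext_card)
    also have "\<dots> = ?F - (\<Sum>u\<in>U. fdeg d u)" using inv by (simp add: sum_diff_nat)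
    also have "\<dots> \<le> ?F - 2 * k" using inv(3) o(2) by simp
    finally show ?thesis using xe by simp
  qed
  have "card (OS n d w (Suc k)) \<le> card (?f ` ?S)" by (rule card_mono[OF finite_imageI[OF fin] sub])
  also have "\<dots> \<le> card ?S" by (rule card_image_le[OF fin])
  also have "\<dots> = (\<Sum>x\<in>OS n d w k. card (Ext n d (snd (snd x))))"
    using OS_finite finE by (intro card_SigmaI) auto
  also have "\<dots> \<le> (\<Sum>x\<in>OS n d w k. ?F - 2 * k)" by (rule sum_mono[OF each])
  also have "\<dots> = card (OS n d w k) * (?F - 2 * k)" by simp
  finally show ?thesis .
qed

lemma OS_card: "card (OS n d w k) \<le> d w * (\<Prod>i<k. (\<Sum>v<n. fdeg d v) - 2 * i)"
proof (induction k)
  case 0 then show ?case using OS_0 by simp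
next
  case (Suc k)
  have "card (OS n d w (Suc k)) \<le> card (OS n d w k) * ((\<Sum>v<n. fdeg d v) - 2 * k)" by (rule OS_Suc)
  also have "\<dots> \<le> d w * (\<Prod>i<k. (\<Sum>v<n. fdeg d v) - 2 * i) * ((\<Sum>v<n. fdeg d v) - 2 * k)"
    using Suc.IH by (rule mult_right_mono) simp
  finally show ?case by (simp add: mult.assoc)
qed

lemma OS_card_real: "real (card (OS n d w k)) \<le> real (d w) * (\<Prod>i<k. real ((\<Sum>v<n. fdeg d v) - 2 * i))"
proof -
  have "real (card (OS n d w k)) \<le> real (d w * (\<Prod>i<k. (\<Sum>v<n. fdeg d v) - 2 * i))"
    using OS_card by (subst of_nat_le_iff)
  then show ?thesis by (simp add: of_nat_prod)
qed




lemma geo_le: fixes \<rho> :: real assumes "0 \<le> \<rho>" "\<rho> < 1" shows "(\<Sum>k<N. \<rho> ^ k) \<le> 1 / (1 - \<rho>)"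
proof -
  have "(\<Sum>k<N. \<rho> ^ k) = (1 - \<rho> ^ N) / (1 - \<rho>)" using assms sum_gp_strict[of \<rho> N] by simp
  also have "\<dots> \<le> 1 / (1 - \<rho>)" using assms by (intro divide_right_mono) auto
  finally show ?thesis .
qed

lemma geo2_le: fixes \<rho> :: real assumes "0 \<le> \<rho>" "\<rho> < 1" shows "(\<Sum>k<N. real (k + 1) * \<rho> ^ k) \<le> 1 / (1 - \<rho>)^2"
proof -
  have eq: "(\<Sum>k<N. real (k + 1) * \<rho> ^ k) * (1 - \<rho>)^2 = 1 - real (N + 1) * \<rho> ^ N + real N * \<rho> ^ (N + 1)" for N
  proof (induction N)
    case 0 then show ?case by simp
  next
    case (Suc N)
    have "(\<Sum>k<Suc N. real (k + 1) * \<rho> ^ k) * (1 - \<rho>)^2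
        = (\<Sum>k<N. real (k + 1) * \<rho> ^ k) * (1 - \<rho>)^2 + real (N + 1) * \<rho> ^ N * (1 - \<rho>)^2"
      by (simp add: algebra_simps)
    also have "\<dots> = 1 - real (Suc N + 1) * \<rho> ^ Suc N + real (Suc N) * \<rho> ^ (Suc N + 1)"
      unfolding Suc.IH by (simp add: algebra_simps power2_eq_square)
    finally show ?case .
  qed
  have "real N * \<rho> ^ (N + 1) \<le> real (N + 1) * \<rho> ^ N"
  proof -
    have "\<rho> ^ (N + 1) \<le> \<rho> ^ N" using assms by (simp add: mult_left_le_one_le)
    then show ?thesis using assms by (intro mult_mono) auto
  qed
  then have "(\<Sum>k<N. real (k + 1) * \<rho> ^ k) * (1 - \<rho>)^2 \<le> 1" using eq by simp
  moreover have "(1 - \<rho>)^2 > 0" using assms by simp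
  ultimately show ?thesis by (simp add: le_divide_eq)
qed

definition Ev :: "nat \<Rightarrow> (nat \<Rightarrow> nat) \<Rightarrow> nat \<Rightarrow> (nat set \<Rightarrow> nat \<times> nat \<Rightarrow> bool) \<Rightarrow> ((nat\<times>nat) \<Rightarrow> (nat\<times>nat)) \<Rightarrow> bool" where
  "Ev n d w R m \<longleftrightarrow> (\<exists>E a U. opath n d w E a U \<and> mp m E \<and> R U (m a))"

lemma close_card:
  fixes c :: "nat \<Rightarrow> nat"
  assumes cb: "\<And>U. finite U \<Longrightarrow> card {b \<in> half_edges n d. R U b} \<le> c (card U)"
  defines "l \<equiv> card (half_edges n d)"
  shows "card {m \<in> perfect_matchings (half_edges n d). Ev n d w R m}
     \<le> (\<Sum>k<n. card (OS n d w k) * c (k + 1) * (if 2 * (k + 1) \<le> l then gg (l - 2 * (k + 1)) else 0))"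
proof -
  let ?H = "half_edges n d"
  let ?A = "perfect_matchings ?H"
  define B where "B x = {b \<in> ?H. R (snd (snd x)) b \<and> b \<notin> set (hes (fst x) @ [fst (snd x)])}" for x
  let ?M = "\<lambda>x b. {m \<in> ?A. mp m (fst x @ [(fst (snd x), b)])}"
  have sub: "{m \<in> ?A. Ev n d w R m} \<subseteq> (\<Union>k<n. \<Union>x\<in>OS n d w k. \<Union>b\<in>B x. ?M x b)"
  proof
    fix m assume m: "m \<in> {m \<in> ?A. Ev n d w R m}"
    then have mA: "m \<in> ?A" by blast
    from m obtain E a U where o: "opath n d w E a U" "mp m E" "R U (m a)" unfolding Ev_def by blast
    have inv: "distinct (hes E @ [a])" "set (hes E @ [a]) \<subseteq> ?H" "U \<subseteq> {..<n}" "card U = length E + 1"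
      using opath_inv[OF o(1)] by blast+
    have "card U \<le> card {..<n}" using inv(3) by (intro card_mono) auto
    then have kn: "length E < n" using inv(4) by simp
    have aH: "a \<in> ?H" using inv(2) by simp
    have maH: "m a \<in> ?H" using pmD(1)[OF mA aH] .
    have mb: "m a \<notin> set (hes E @ [a])" using opath_close[OF o(1) mA o(2)] .
    have x: "(E,a,U) \<in> OS n d w (length E)" using o(1) unfolding OS_def by simp
    have b: "m a \<in> B (E,a,U)" using maH o(3) mb unfolding B_def by simp
    have "mp m (E @ [(a, m a)])" using o(2) unfolding mp_def by simp
    then have "m \<in> ?M (E,a,U) (m a)" using mA by simp
    then show "m \<in> (\<Union>k<n. \<Union>x\<in>OS n d w k. \<Union>b\<in>B x. ?M x b)" using kn x b by blast
  qed
  have finB: "finite (B x)" for x unfolding B_def using half_edges_finite by simp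
  have Mc: "card (?M x b) = (if 2 * (k + 1) \<le> l then gg (l - 2 * (k + 1)) else 0)"
    if x: "x \<in> OS n d w k" and b: "b \<in> B x" for k x b
  proof -
    obtain E a U where xe: "x = (E,a,U)" by (cases x)
    have o: "opath n d w E a U" "length E = k" using x xe unfolding OS_def by auto
    have inv: "distinct (hes E @ [a])" "set (hes E @ [a]) \<subseteq> ?H" using opath_inv[OF o(1)] by blast+
    have bb: "b \<in> ?H" "b \<notin> set (hes E @ [a])" using b xe unfolding B_def by auto
    have dis: "distinct (hes (E @ [(a,b)]))" using inv(1) bb(2) by auto
    have sH: "set (hes (E @ [(a,b)])) \<subseteq> ?H" using inv(2) bb(1) by simp
    have "card (set (hes (E @ [(a,b)]))) \<le> card ?H" using sH half_edges_finite by (intro card_mono)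
    then have le: "2 * (k + 1) \<le> l" using distinct_card[OF dis] o(2) unfolding l_def by simp
    have "card (?M x b) = gg (card ?H - 2 * length (E @ [(a,b)]))"
      using pairs_card[OF half_edges_finite dis sH] xe by simp
    then show ?thesis using le o(2) unfolding l_def by simp
  qed
  have Bc: "card (B x) \<le> c (k + 1)" if x: "x \<in> OS n d w k" for k x
  proof -
    obtain E a U where xe: "x = (E,a,U)" by (cases x)
    have o: "opath n d w E a U" "length E = k" using x xe unfolding OS_def by auto
    have inv: "finite U" "card U = length E + 1" using opath_inv[OF o(1)] by blast+
    have "card (B x) \<le> card {b \<in> ?H. R U b}"
      using half_edges_finite xe unfolding B_def by (intro card_mono) auto
    also have "\<dots> \<le> c (card U)" by (rule cb[OF inv(1)])
    finally show ?thesis using inv o by simp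
  qed
  have finA: "finite ?A" by (rule pm_finite[OF half_edges_finite])
  have "card {m \<in> ?A. Ev n d w R m} \<le> card (\<Union>k<n. \<Union>x\<in>OS n d w k. \<Union>b\<in>B x. ?M x b)"
    by (rule card_mono[OF _ sub]) (rule finite_subset[OF _ finA], blast)
  also have "\<dots> \<le> (\<Sum>k<n. card (\<Union>x\<in>OS n d w k. \<Union>b\<in>B x. ?M x b))" by (rule card_UN_le) simp
  also have "\<dots> \<le> (\<Sum>k<n. card (OS n d w k) * c (k + 1) * (if 2 * (k + 1) \<le> l then gg (l - 2 * (k + 1)) else 0))"
  proof (rule sum_mono)
    fix k assume "k \<in> {..<n}"
    let ?G = "(if 2 * (k + 1) \<le> l then gg (l - 2 * (k + 1)) else 0)"
    have "card (\<Union>x\<in>OS n d w k. \<Union>b\<in>B x. ?M x b) \<le> (\<Sum>x\<in>OS n d w k. card (\<Union>b\<in>B x. ?M x b))"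
      by (rule card_UN_le[OF OS_finite])
    also have "\<dots> \<le> (\<Sum>x\<in>OS n d w k. c (k + 1) * ?G)"
    proof (rule sum_mono)
      fix x assume x: "x \<in> OS n d w k"
      have "card (\<Union>b\<in>B x. ?M x b) \<le> (\<Sum>b\<in>B x. card (?M x b))" by (rule card_UN_le[OF finB])
      also have "\<dots> = (\<Sum>b\<in>B x. ?G)" using Mc[OF x] by simp
      also have "\<dots> = card (B x) * ?G" by simp
      also have "\<dots> \<le> c (k + 1) * ?G" using Bc[OF x] by (rule mult_right_mono) simp
      finally show "card (\<Union>b\<in>B x. ?M x b) \<le> c (k + 1) * ?G" .
    qed
    also have "\<dots> = card (OS n d w k) * c (k + 1) * ?G" by simp
    finally show "card (\<Union>x\<in>OS n d w k. \<Union>b\<in>B x. ?M x b) \<le> card (OS n d w k) * c (k + 1) * ?G" .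
  qed
  finally show ?thesis .
qed

lemma close_prob:
  fixes c :: "nat \<Rightarrow> nat" and \<rho> :: real
  assumes cb: "\<And>U. finite U \<Longrightarrow> card {b \<in> half_edges n d. R U b} \<le> c (card U)"
    and ev: "even (card (half_edges n d))" and l2: "card (half_edges n d) \<ge> 2" and rho: "0 \<le> \<rho>" "\<rho> \<le> 1"
    and F: "real (\<Sum>v<n. fdeg d v) \<le> \<rho> * (real (card (half_edges n d)) - 3)"
  shows "real (card {m \<in> perfect_matchings (half_edges n d). Ev n d w R m}) / real (card (perfect_matchings (half_edges n d)))
     \<le> (\<Sum>k<n. real (d w) * real (c (k + 1)) * \<rho> ^ k / (real (card (half_edges n d)) - 1))"
proof -
  define l where "l = card (half_edges n d)"
  define F where "F = (\<Sum>v<n. fdeg d v)"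
  have A: "card (perfect_matchings (half_edges n d)) = gg l"
    unfolding l_def by (rule pm_card[OF half_edges_finite])
  have gl: "real (gg l) > 0" using gg_even_pos ev unfolding l_def by simp
  have trm: "real (card (OS n d w k) * c (k + 1) * (if 2 * (k + 1) \<le> l then gg (l - 2 * (k + 1)) else 0)) / real (gg l)
      \<le> real (d w) * real (c (k + 1)) * \<rho> ^ k / (real l - 1)" for k
  proof (cases "2 * (k + 1) \<le> l")
    case False
    have "0 \<le> real (d w) * real (c (k + 1)) * \<rho> ^ k / (real l - 1)"
      using rho l2 unfolding l_def by (intro divide_nonneg_nonneg mult_nonneg_nonneg) auto
    then show ?thesis using False by simp
  next
    case True
    have r: "real (gg (l - 2 * (k + 1))) / real (gg l) * (\<Prod>i<k. real (F - 2 * i)) \<le> \<rho> ^ k / (real l - 1)"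
      by (rule gg_ratio_bound) (use ev True rho F in \<open>simp_all add: l_def F_def\<close>)
    have os: "real (card (OS n d w k)) \<le> real (d w) * (\<Prod>i<k. real (F - 2 * i))"
      unfolding F_def by (rule OS_card_real)
    have "real (card (OS n d w k) * c (k + 1) * (if 2 * (k + 1) \<le> l then gg (l - 2 * (k + 1)) else 0)) / real (gg l)
        = real (card (OS n d w k)) * real (c (k + 1)) * (real (gg (l - 2 * (k + 1))) / real (gg l))"
      using True by simp
    also have "\<dots> \<le> real (d w) * (\<Prod>i<k. real (F - 2 * i)) * real (c (k + 1)) * (real (gg (l - 2 * (k + 1))) / real (gg l))"
      using os by (intro mult_right_mono) (auto intro: divide_nonneg_nonneg)
    also have "\<dots> = real (d w) * real (c (k + 1)) * (real (gg (l - 2 * (k + 1))) / real (gg l) * (\<Prod>i<k. real (F - 2 * i)))"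
      by (simp add: algebra_simps)
    also have "\<dots> \<le> real (d w) * real (c (k + 1)) * (\<rho> ^ k / (real l - 1))"
      using r by (intro mult_left_mono) auto
    finally show ?thesis by simp
  qed
  have "real (card {m \<in> perfect_matchings (half_edges n d). Ev n d w R m}) / real (gg l)
      \<le> real (\<Sum>k<n. card (OS n d w k) * c (k + 1) * (if 2 * (k + 1) \<le> l then gg (l - 2 * (k + 1)) else 0)) / real (gg l)"
  proof (rule divide_right_mono)
    have cc: "card {m \<in> perfect_matchings (half_edges n d). Ev n d w R m} \<le> (\<Sum>k<n. card (OS n d w k) * c (k + 1) * (if 2 * (k + 1) \<le> l then gg (l - 2 * (k + 1)) else 0))"
      using close_card[of n d R c w, OF cb] unfolding l_def by simp
    show "real (card {m \<in> perfect_matchings (half_edges n d). Ev n d w R m}) \<le> real (\<Sum>k<n. card (OS n d w k) * c (k + 1) * (if 2 * (k + 1) \<le> l then gg (l - 2 * (k + 1)) else 0))"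
      using cc by (simp only: of_nat_le_iff)
  qed (use gl in simp)
  also have "\<dots> = (\<Sum>k<n. real (card (OS n d w k) * c (k + 1) * (if 2 * (k + 1) \<le> l then gg (l - 2 * (k + 1)) else 0)) / real (gg l))"
    by (simp add: sum_divide_distrib)
  also have "\<dots> \<le> (\<Sum>k<n. real (d w) * real (c (k + 1)) * \<rho> ^ k / (real l - 1))"
    by (rule sum_mono) (rule trm)
  finally show ?thesis unfolding A l_def .
qed




lemma nontree_witness:
  assumes m: "m \<in> perfect_matchings (half_edges n d)" and v: "v < n"
    and nt: "\<not> is_tree_component n d m (component n d m v)"
  shows "\<exists>E a U. opath n d v E a U \<and> mp m E \<and> fst (m a) \<in> U"
proof -
  define H where "H = half_edges n d"
  define R where "R = adj n d m"
  define C where "C = component n d m v"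
  have mH: "m \<in> perfect_matchings H" using m H_def by simp
  have Rchar: "(x,y) \<in> R \<longleftrightarrow> (\<exists>h\<in>H. fst h = x \<and> fst (m h) = y)" for x y
  proof
    assume "(x,y) \<in> R"
    then obtain i j where "(x,i) \<in> H" "m (x,i) = (y,j)" unfolding R_def adj_def H_def by blast
    then show "\<exists>h\<in>H. fst h = x \<and> fst (m h) = y" by (intro bexI[of _ "(x,i)"]) auto
  next
    assume "\<exists>h\<in>H. fst h = x \<and> fst (m h) = y"
    then obtain h where h: "h \<in> H" "fst h = x" "fst (m h) = y" by blast
    obtain i where hi: "h = (x,i)" using h(2) by (cases h) auto
    obtain j where "m h = (y,j)" using h(3) by (cases "m h") auto
    then have "\<exists>i j. (x,i) \<in> half_edges n d \<and> m (x,i) = (y,j)" using h hi unfolding H_def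
      by (intro exI[of _ i] exI[of _ j]) simp
    then show "(x,y) \<in> R" unfolding R_def adj_def by simp
  qed
  have Cchar: "w \<in> C \<longleftrightarrow> (\<exists>k. (v,w) \<in> R ^^ k)" for w
    unfolding C_def component_def R_def by (simp add: rtrancl_power)
  define dist where "dist w = (LEAST k. (v,w) \<in> R ^^ k)" for w
  have distI: "(v,w) \<in> R ^^ dist w" if "w \<in> C" for w
    using that Cchar unfolding dist_def by (metis LeastI)
  have distle: "(v,w) \<in> R ^^ k \<Longrightarrow> dist w \<le> k" for w k
    unfolding dist_def by (rule Least_le)
  have vC: "v \<in> C" using Cchar[of v] by (metis relpow.simps(1) pair_in_Id_conv)
  have dv: "dist v = 0" using distle[of v 0] by simp
  have d0: "w = v" if "w \<in> C" "dist w = 0" for w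
    using distI[OF that(1)] that(2) by simp
  have D1: "fst (m h) \<in> C \<and> dist (fst (m h)) \<le> dist (fst h) + 1" if h: "h \<in> H" "fst h \<in> C" for h
  proof -
    have "(v, fst h) \<in> R ^^ dist (fst h)" by (rule distI[OF h(2)])
    moreover have "(fst h, fst (m h)) \<in> R" using Rchar h(1) by blast
    ultimately have "(v, fst (m h)) \<in> R ^^ Suc (dist (fst h))" by auto
    then show ?thesis using Cchar distle by fastforce
  qed
  have D2: "\<exists>h\<in>H. fst h = w \<and> fst (m h) \<in> C \<and> dist (fst (m h)) + 1 = dist w" if w: "w \<in> C" "w \<noteq> v" for w
  proof -
    have "dist w \<noteq> 0" using d0 w by blast
    then obtain j where j: "dist w = Suc j" by (cases "dist w") auto
    have "(v,w) \<in> R ^^ Suc j" using distI[OF w(1)] j by simp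
    then obtain u where u: "(v,u) \<in> R ^^ j" "(u,w) \<in> R" by auto
    then obtain h' where h': "h' \<in> H" "fst h' = u" "fst (m h') = w" using Rchar by blast
    have uC: "u \<in> C" using u(1) Cchar by blast
    have du: "dist u \<le> j" using distle[OF u(1)] .
    have "dist w \<le> dist u + 1" using D1[of h'] h' uC by simp
    then have du2: "dist u = j" using du j by simp
    have mh': "m h' \<in> H" "m (m h') = h'" using pmD(1,3)[OF mH h'(1)] by auto
    show ?thesis using mh' h' uC du2 j by (intro bexI[of _ "m h'"]) auto
  qed
  define ph where "ph w = (SOME h. h \<in> H \<and> fst h = w \<and> fst (m h) \<in> C \<and> dist (fst (m h)) + 1 = dist w)" for w
  have ph: "ph w \<in> H \<and> fst (ph w) = w \<and> fst (m (ph w)) \<in> C \<and> dist (fst (m (ph w))) + 1 = dist w"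
    if "w \<in> C" "w \<noteq> v" for w
  proof -
    have ex: "\<exists>h. h \<in> H \<and> fst h = w \<and> fst (m h) \<in> C \<and> dist (fst (m h)) + 1 = dist w"
      using D2[OF that] by blast
    show ?thesis unfolding ph_def by (rule someI_ex[OF ex])
  qed
  have PP: "m (ph x) \<noteq> ph p" if x: "x \<in> C" "x \<noteq> v" and p: "p = fst (m (ph x))" "p \<noteq> v" for x p
  proof
    assume eq: "m (ph x) = ph p"
    have pC: "p \<in> C" using ph[OF x] p by simp
    have "m (m (ph x)) = ph x" using pmD(3)[OF mH] ph[OF x] by blast
    then have "fst (m (ph p)) = x" using eq ph[OF x] by simp
    then have "dist x + 1 = dist p" using ph[OF pC p(2)] by simp
    moreover have "dist p + 1 = dist x" using ph[OF x] p by simp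
    ultimately show False by simp
  qed
  have TP: "\<And>x a. x \<in> C \<Longrightarrow> dist x = k \<Longrightarrow> a \<in> H \<Longrightarrow> fst a = x \<Longrightarrow> (x \<noteq> v \<Longrightarrow> a \<noteq> ph x) \<Longrightarrow>
      (\<exists>E U. opath n d v E a U \<and> mp m E \<and> (\<forall>u\<in>U. dist u \<le> k))" for k
  proof (induction k)
    case (0 x a)
    have "x = v" using d0 "0.prems"(1,2) by blast
    then have "opath n d v [] a {v}" using opath.base[of a n d] "0.prems"(3,4) H_def by simp
    then show ?case using dv by (intro exI[of _ "[]"] exI[of _ "{v}"]) (simp add: mp_def)
  next
    case (Suc j x a)
    have x: "x \<in> C" "dist x = Suc j" and a: "a \<in> H" "fst a = x" using Suc.prems(1-4) by auto
    have xv: "x \<noteq> v" using x dv by auto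
    have an: "a \<noteq> ph x" using Suc.prems(5) xv .
    define p where "p = fst (m (ph x))"
    have phx: "ph x \<in> H" "fst (ph x) = x" "p \<in> C" "dist p = j" using ph[OF x(1) xv] x(2) p_def by auto
    have ap: "m (ph x) \<in> H" "fst (m (ph x)) = p" "m (m (ph x)) = ph x"
      using pmD(1,3)[OF mH phx(1)] p_def by auto
    have apn: "m (ph x) \<noteq> ph p" if "p \<noteq> v" using PP[OF x(1) xv p_def that] .
    have "\<exists>E U. opath n d v E (m (ph x)) U \<and> mp m E \<and> (\<forall>u\<in>U. dist u \<le> j)"
      by (rule Suc.IH[OF phx(3) phx(4) ap(1) ap(2) apn])
    then obtain E U where o: "opath n d v E (m (ph x)) U" "mp m E" "\<forall>u\<in>U. dist u \<le> j" by blast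
    have xU: "x \<notin> U" using o(3) x(2) by fastforce
    have o2: "opath n d v (E @ [(m (ph x), ph x)]) a (insert x U)"
      using opath.step[OF o(1), of "ph x" a] phx a an xU H_def by simp
    have "mp m (E @ [(m (ph x), ph x)])" using o(2) ap(3) unfolding mp_def by simp
    moreover have "\<forall>u\<in>insert x U. dist u \<le> Suc j" using o(3) x(2) by auto
    ultimately show ?case using o2 by blast
  qed
  have UP: "\<And>y E U. y \<in> C \<Longrightarrow> dist y = k \<Longrightarrow> y \<noteq> v \<Longrightarrow> opath n d v E (ph y) U \<Longrightarrow> mp m E \<Longrightarrow>
      (\<exists>E' a' U'. opath n d v E' a' U' \<and> mp m E' \<and> fst (m a') \<in> U')" for k
  proof (induction k)
    case (0 y E U) then show ?case using d0 by blast
  next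
    case (Suc j y E U)
    have y: "y \<in> C" "dist y = Suc j" "y \<noteq> v" and o: "opath n d v E (ph y) U" "mp m E" using Suc.prems by auto
    define p where "p = fst (m (ph y))"
    show ?case
    proof (cases "p \<in> U")
      case True then show ?thesis using o p_def by blast
    next
      case False
      have vU: "v \<in> U" using opath_inv[OF o(1)] by blast
      then have pv: "p \<noteq> v" using False by auto
      have phy: "ph y \<in> H" "p \<in> C" "dist p = j" using ph[OF y(1,3)] y(2) p_def by auto
      have b: "m (ph y) \<in> H" "fst (m (ph y)) = p" using pmD(1)[OF mH phy(1)] p_def by auto
      have php: "ph p \<in> H" "fst (ph p) = p" using ph[OF phy(2) pv] by auto
      have bn: "m (ph y) \<noteq> ph p" using PP[OF y(1,3) p_def pv] .
      have o2: "opath n d v (E @ [(ph y, m (ph y))]) (ph p) (insert p U)"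
        using opath.step[OF o(1), of "m (ph y)" "ph p"] b php bn False H_def by simp
      have mp2: "mp m (E @ [(ph y, m (ph y))])" using o(2) unfolding mp_def by simp
      show ?thesis by (rule Suc.IH[OF phy(2) phy(3) pv o2 mp2])
    qed
  qed
  have CV: "C \<subseteq> insert v {..<n}"
  proof
    fix w assume "w \<in> C"
    then obtain k where "(v,w) \<in> R ^^ k" using Cchar by blast
    then show "w \<in> insert v {..<n}"
    proof (cases k)
      case 0 then show ?thesis using \<open>(v,w) \<in> R ^^ k\<close> by simp
    next
      case (Suc j)
      then obtain u where "(u,w) \<in> R" using \<open>(v,w) \<in> R ^^ k\<close> by auto
      then obtain h where "h \<in> H" "fst (m h) = w" using Rchar by blast
      then have "m h \<in> H" using pmD(1)[OF mH] by blast
      then show ?thesis using \<open>fst (m h) = w\<close> H_def by (simp add: half_edges_mem)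
    qed
  qed
  have finC: "finite C" using CV finite_subset by blast
  define EC where "EC = edges_in n d m C"
  have EC_eq: "EC = (\<lambda>h. {h, m h}) ` {h \<in> H. fst h \<in> C}" unfolding EC_def edges_in_def H_def image_def by blast
  have finEC: "finite EC" unfolding EC_eq H_def using half_edges_finite by simp
  define pe where "pe w = {ph w, m (ph w)}" for w
  have pe_in: "pe ` (C - {v}) \<subseteq> EC"
  proof
    fix e assume "e \<in> pe ` (C - {v})"
    then obtain w where w: "w \<in> C" "w \<noteq> v" "e = pe w" by blast
    have "ph w \<in> {h \<in> H. fst h \<in> C}" using ph[OF w(1,2)] w(1) by simp
    from imageI[OF this, of "\<lambda>h. {h, m h}"] show "e \<in> EC" unfolding EC_eq using w(3) pe_def by simp
  qed
  have pe_inj: "inj_on pe (C - {v})"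
  proof (rule inj_onI)
    fix w w' assume w: "w \<in> C - {v}" and w': "w' \<in> C - {v}" and eq: "pe w = pe w'"
    have pw: "ph w \<in> H" "fst (ph w) = w" "dist (fst (m (ph w))) + 1 = dist w" using ph w by auto
    have pw': "ph w' \<in> H" "fst (ph w') = w'" "dist (fst (m (ph w'))) + 1 = dist w'" using ph w' by auto
    have mm: "m (m (ph w)) = ph w" "m (m (ph w')) = ph w'" using pmD(3)[OF mH] pw(1) pw'(1) by auto
    from eq have "ph w = ph w' \<or> (ph w = m (ph w') \<and> m (ph w) = ph w')" unfolding pe_def by (auto simp: doubleton_eq_iff)
    then show "w = w'"
    proof
      assume "ph w = ph w'" then have "fst (ph w) = fst (ph w')" by simp
      then show ?thesis using pw(2) pw'(2) by simp
    next
      assume c: "ph w = m (ph w') \<and> m (ph w) = ph w'"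
      then have "fst (m (ph w)) = w'" "fst (m (ph w')) = w" using pw pw' by auto
      then show ?thesis using pw(3) pw'(3) by simp
    qed
  qed
  have cpe: "card (pe ` (C - {v})) = card C - 1"
    using card_image[OF pe_inj] vC finC by simp
  have "card EC + 1 \<noteq> card C" using nt unfolding is_tree_component_def EC_def C_def by simp
  moreover have "card C - 1 \<le> card EC" using cpe card_mono[OF finEC pe_in] by simp
  moreover have "card C \<ge> 1" using vC finC by (metis One_nat_def Suc_leI card_gt_0_iff empty_iff)
  ultimately have "card (pe ` (C - {v})) < card EC" using cpe by linarith
  then have "\<not> EC \<subseteq> pe ` (C - {v})"
  proof -
    assume lt: "card (pe ` (C - {v})) < card EC"
    show ?thesis
    proof
      assume "EC \<subseteq> pe ` (C - {v})"
      then have "card EC \<le> card (pe ` (C - {v}))" using finC by (intro card_mono) auto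
      then show False using lt by simp
    qed
  qed
  then obtain e where e: "e \<in> EC" "e \<notin> pe ` (C - {v})" by blast
  then obtain h where h: "h \<in> H" "fst h \<in> C" "e = {h, m h}" unfolding EC_eq by blast
  have np1: "h \<noteq> ph w" if "w \<in> C - {v}" for w
    using e(2) h(3) that unfolding pe_def by blast
  have np2: "m h \<noteq> ph w" if "w \<in> C - {v}" for w
  proof
    assume eq: "m h = ph w"
    have "m (m h) = h" using pmD(3)[OF mH h(1)] .
    then have "pe w = {m h, h}" unfolding pe_def using eq by simp
    then have "e = pe w" using h(3) by (simp add: insert_commute)
    then show False using e(2) that by blast
  qed
  define x where "x = fst h"
  have xC: "x \<in> C" using h(2) x_def by simp
  have hx: "h \<noteq> ph x" if "x \<noteq> v" using np1[of x] xC that by simp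
  have "\<exists>E U. opath n d v E h U \<and> mp m E \<and> (\<forall>u\<in>U. dist u \<le> dist x)"
    by (rule TP[OF xC refl h(1) x_def[symmetric] hx])
  then obtain E U where o: "opath n d v E h U" "mp m E" by blast
  define y where "y = fst (m h)"
  show ?thesis
  proof (cases "y \<in> U")
    case True then show ?thesis using o unfolding y_def by (intro exI[of _ E] exI[of _ h] exI[of _ U]) simp
  next
    case False
    have vU: "v \<in> U" using opath_inv[OF o(1)] by simp
    then have yv: "y \<noteq> v" using False by auto
    have yC: "y \<in> C" using D1[OF h(1,2)] y_def by simp
    have mh: "m h \<in> H" using pmD(1)[OF mH h(1)] .
    have phy: "ph y \<in> H" "fst (ph y) = y" using ph[OF yC yv] by auto
    have nb: "m h \<noteq> ph y" using np2[of y] yC yv by simp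
    have o2: "opath n d v (E @ [(h, m h)]) (ph y) (insert y U)"
      using opath.step[OF o(1), of "m h" "ph y"] mh phy nb False unfolding H_def y_def by simp
    have "mp m (E @ [(h, m h)])" using o(2) unfolding mp_def by simp
    then show ?thesis by (rule UP[OF yC refl yv o2])
  qed
qed





lemma cb_cyc: "card {b \<in> half_edges n d. fst b = w} \<le> d w"
proof -
  have "{b \<in> half_edges n d. fst b = w} \<subseteq> {w} \<times> {..<d w}" by (auto simp: half_edges_def)
  then have "card {b \<in> half_edges n d. fst b = w} \<le> card ({w} \<times> {..<d w})" by (intro card_mono) auto
  then show ?thesis by simp
qed

lemma cb_small: "finite U \<Longrightarrow> card {b \<in> half_edges n d. fst b \<in> U \<and> d (fst b) \<le> T} \<le> T * card U"
proof -
  assume fU: "finite U"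
  have "{b \<in> half_edges n d. fst b \<in> U \<and> d (fst b) \<le> T} \<subseteq> U \<times> {..<T}" by (auto simp: half_edges_def)
  then have "card {b \<in> half_edges n d. fst b \<in> U \<and> d (fst b) \<le> T} \<le> card (U \<times> {..<T})"
    using fU by (intro card_mono) auto
  then show ?thesis using fU by (simp add: card_cartesian_product mult.commute)
qed

lemma sum_ind: "finite A \<Longrightarrow> (\<Sum>m\<in>A. if P m then 1 else 0::real) = real (card {m\<in>A. P m})"
  by (simp add: sum.inter_filter[symmetric])

lemma markov_card:
  fixes X :: "'a \<Rightarrow> nat" and K :: real
  assumes "finite A" "K > 0"
  shows "real (card {m \<in> A. K < real (X m)}) \<le> (\<Sum>m\<in>A. real (X m)) / K"
proof -
  have "K * real (card {m \<in> A. K < real (X m)}) = (\<Sum>m\<in>{m \<in> A. K < real (X m)}. K)" by simp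
  also have "\<dots> \<le> (\<Sum>m\<in>{m \<in> A. K < real (X m)}. real (X m))" by (rule sum_mono) simp
  also have "\<dots> \<le> (\<Sum>m\<in>A. real (X m))" using assms(1) by (intro sum_mono2) auto
  finally show ?thesis using assms(2) by (simp add: field_simps)
qed

lemma main_bound:
  fixes \<rho> K :: real and T :: nat and n :: nat and d :: "nat \<Rightarrow> nat"
  defines "l \<equiv> card (half_edges n d)"
  assumes ev: "even l" and l2: "l \<ge> 2" and rho: "0 \<le> \<rho>" "\<rho> < 1"
    and F: "real (\<Sum>v<n. fdeg d v) \<le> \<rho> * (real l - 3)" and K: "K > 0"
  shows "measure_pmf.prob (CM n d) {m. K < real (B n d m)}
     \<le> (\<Sum>w\<in>{w. w < n \<and> T < d w}. real (d w) ^ 2) / ((real l - 1) * (1 - \<rho>))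
        + real l * real T / (K * (real l - 1) * (1 - \<rho>)^2)"
proof -
  let ?H = "half_edges n d"
  let ?A = "perfect_matchings ?H"
  have finA: "finite ?A" by (rule pm_finite[OF half_edges_finite])
  have cA: "card ?A = gg l" unfolding l_def by (rule pm_card[OF half_edges_finite])
  have cApos: "real (card ?A) > 0" using cA gg_even_pos[OF ev] by simp
  have Ane: "?A \<noteq> {}" using cApos by auto
  define E1 where "E1 m \<longleftrightarrow> (\<exists>w\<in>{w. w < n \<and> T < d w}. Ev n d w (\<lambda>U b. fst b = w) m)" for m
  define Sm where "Sm v m \<longleftrightarrow> Ev n d v (\<lambda>U b. fst b \<in> U \<and> d (fst b) \<le> T) m" for v m
  define X where "X m = card {v \<in> {..<n}. Sm v m}" for m
  have BX: "B n d m \<le> X m" if mA: "m \<in> ?A" and nE: "\<not> E1 m" for m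
  proof -
    have "{v. v < n \<and> \<not> is_tree_component n d m (component n d m v)} \<subseteq> {v \<in> {..<n}. Sm v m}"
    proof
      fix v assume v: "v \<in> {v. v < n \<and> \<not> is_tree_component n d m (component n d m v)}"
      then obtain E a U where o: "opath n d v E a U" "mp m E" "fst (m a) \<in> U"
        using nontree_witness[OF mA] by blast
      define z where "z = fst (m a)"
      have aH: "a \<in> ?H" using opath_inv[OF o(1)] by simp
      have maH: "m a \<in> ?H" using pmD(1)[OF mA aH] .
      have zn: "z < n" using maH z_def by (simp add: half_edges_mem)
      show "v \<in> {v \<in> {..<n}. Sm v m}"
      proof (cases "d z \<le> T")
        case True
        then have "Sm v m" unfolding Sm_def Ev_def using o z_def by blast
        then show ?thesis using v by simp
      next
        case False
        obtain E2 U2 where o2: "opath n d z E2 a U2" "set E2 \<subseteq> set E"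
          using opath_suffix[OF o(1) o(3)] z_def by blast
        have "mp m E2" using o(2) o2(2) unfolding mp_def by blast
        then have "Ev n d z (\<lambda>U b. fst b = z) m" unfolding Ev_def using o2(1) z_def by blast
        then have "E1 m" unfolding E1_def using zn False by auto
        then show ?thesis using nE by simp
      qed
    qed
    then show ?thesis unfolding B_def X_def by (intro card_mono) auto
  qed
  have sub: "{m \<in> ?A. K < real (B n d m)} \<subseteq> {m \<in> ?A. E1 m} \<union> {m \<in> ?A. K < real (X m)}"
    using BX by fastforce
  have E1b: "real (card {m \<in> ?A. E1 m}) / real (card ?A)
      \<le> (\<Sum>w\<in>{w. w < n \<and> T < d w}. real (d w) ^ 2) / ((real l - 1) * (1 - \<rho>))"
  proof -
    have "{m \<in> ?A. E1 m} = (\<Union>w\<in>{w. w < n \<and> T < d w}. {m \<in> ?A. Ev n d w (\<lambda>U b. fst b = w) m})"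
      unfolding E1_def by blast
    then have "card {m \<in> ?A. E1 m} \<le> (\<Sum>w\<in>{w. w < n \<and> T < d w}. card {m \<in> ?A. Ev n d w (\<lambda>U b. fst b = w) m})"
      using card_UN_le[of "{w. w < n \<and> T < d w}" "\<lambda>w. {m \<in> ?A. Ev n d w (\<lambda>U b. fst b = w) m}"] by simp
    then have "real (card {m \<in> ?A. E1 m}) / real (card ?A)
        \<le> real (\<Sum>w\<in>{w. w < n \<and> T < d w}. card {m \<in> ?A. Ev n d w (\<lambda>U b. fst b = w) m}) / real (card ?A)"
      using cApos by (intro divide_right_mono) (simp only: of_nat_le_iff, simp)
    also have "\<dots> = (\<Sum>w\<in>{w. w < n \<and> T < d w}. real (card {m \<in> ?A. Ev n d w (\<lambda>U b. fst b = w) m}) / real (card ?A))"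
      by (simp add: sum_divide_distrib)
    also have "\<dots> \<le> (\<Sum>w\<in>{w. w < n \<and> T < d w}. real (d w) ^ 2 / ((real l - 1) * (1 - \<rho>)))"
    proof (rule sum_mono)
      fix w assume "w \<in> {w. w < n \<and> T < d w}"
      have "real (card {m \<in> ?A. Ev n d w (\<lambda>U b. fst b = w) m}) / real (card ?A)
          \<le> (\<Sum>k<n. real (d w) * real (d w) * \<rho> ^ k / (real l - 1))"
        using close_prob[of n d "\<lambda>U b. fst b = w" "\<lambda>_. d w" \<rho> w] cb_cyc ev l2 rho F unfolding l_def by simp
      also have "\<dots> = real (d w) ^ 2 / (real l - 1) * (\<Sum>k<n. \<rho> ^ k)"
        by (simp add: sum_distrib_left sum_divide_distrib power2_eq_square mult.commute mult.left_commute)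
      also have "\<dots> \<le> real (d w) ^ 2 / (real l - 1) * (1 / (1 - \<rho>))"
        using geo_le[OF rho] l2 by (intro mult_left_mono) auto
      also have "\<dots> = real (d w) ^ 2 / ((real l - 1) * (1 - \<rho>))" by simp
      finally show "real (card {m \<in> ?A. Ev n d w (\<lambda>U b. fst b = w) m}) / real (card ?A)
          \<le> real (d w) ^ 2 / ((real l - 1) * (1 - \<rho>))" .
    qed
    also have "\<dots> = (\<Sum>w\<in>{w. w < n \<and> T < d w}. real (d w) ^ 2) / ((real l - 1) * (1 - \<rho>))"
      by (simp add: sum_divide_distrib)
    finally show ?thesis .
  qed
  have Xb: "real (card {m \<in> ?A. K < real (X m)}) / real (card ?A) \<le> real l * real T / (K * (real l - 1) * (1 - \<rho>)^2)"
  proof -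
    have "(\<Sum>m\<in>?A. real (X m)) = (\<Sum>m\<in>?A. \<Sum>v<n. (if Sm v m then 1 else 0::real))"
      unfolding X_def by (intro sum.cong refl) (simp add: sum_ind)
    also have "\<dots> = (\<Sum>v<n. \<Sum>m\<in>?A. (if Sm v m then 1 else 0::real))" by (rule sum.swap)
    also have "\<dots> = (\<Sum>v<n. real (card {m \<in> ?A. Sm v m}))" using finA by (intro sum.cong refl) (simp add: sum_ind)
    finally have sw: "(\<Sum>m\<in>?A. real (X m)) = (\<Sum>v<n. real (card {m \<in> ?A. Sm v m}))" .
    have each: "real (card {m \<in> ?A. Sm v m}) / real (card ?A) \<le> real (d v) * real T / ((real l - 1) * (1 - \<rho>)^2)" for v
    proof -
      have "real (card {m \<in> ?A. Sm v m}) / real (card ?A)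
          \<le> (\<Sum>k<n. real (d v) * real (T * (k + 1)) * \<rho> ^ k / (real l - 1))"
        unfolding Sm_def
        using close_prob[of n d "\<lambda>U b. fst b \<in> U \<and> d (fst b) \<le> T" "\<lambda>j. T * j" \<rho> v] cb_small ev l2 rho F
        unfolding l_def by simp
      also have "\<dots> = real (d v) * real T / (real l - 1) * (\<Sum>k<n. real (k + 1) * \<rho> ^ k)"
        by (simp add: sum_distrib_left sum_divide_distrib) (intro sum.cong refl, simp add: algebra_simps)
      also have "\<dots> \<le> real (d v) * real T / (real l - 1) * (1 / (1 - \<rho>)^2)"
        using geo2_le[OF rho] l2 by (intro mult_left_mono) auto
      also have "\<dots> = real (d v) * real T / ((real l - 1) * (1 - \<rho>)^2)" by simp
      finally show ?thesis .
    qed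
    have "real (card {m \<in> ?A. K < real (X m)}) / real (card ?A) \<le> (\<Sum>m\<in>?A. real (X m)) / K / real (card ?A)"
      using markov_card[OF finA K, of X] cApos by (intro divide_right_mono) auto
    also have "\<dots> = (\<Sum>v<n. real (card {m \<in> ?A. Sm v m}) / real (card ?A)) / K"
      unfolding sw by (simp add: sum_divide_distrib mult.commute)
    also have "\<dots> \<le> (\<Sum>v<n. real (d v) * real T / ((real l - 1) * (1 - \<rho>)^2)) / K"
      using K by (intro divide_right_mono sum_mono each) auto
    also have "\<dots> = real l * real T / (K * (real l - 1) * (1 - \<rho>)^2)"
      unfolding l_def half_edges_card by (simp add: sum_divide_distrib[symmetric] sum_distrib_right[symmetric])
    finally show ?thesis .
  qed
  have "measure_pmf.prob (CM n d) {m. K < real (B n d m)} = real (card ({m. K < real (B n d m)} \<inter> ?A)) / real (card ?A)"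
    unfolding CM_def using measure_pmf_of_set[OF Ane finA, of "{m. K < real (B n d m)}"] by (simp add: Int_commute)
  also have "{m. K < real (B n d m)} \<inter> ?A = {m \<in> ?A. K < real (B n d m)}" by blast
  also have "real (card {m \<in> ?A. K < real (B n d m)}) / real (card ?A)
      \<le> real (card ({m \<in> ?A. E1 m} \<union> {m \<in> ?A. K < real (X m)})) / real (card ?A)"
    using cApos card_mono[OF _ sub] finA by (intro divide_right_mono) auto
  also have "\<dots> \<le> (real (card {m \<in> ?A. E1 m}) + real (card {m \<in> ?A. K < real (X m)})) / real (card ?A)"
    using cApos card_Un_le[of "{m \<in> ?A. E1 m}" "{m \<in> ?A. K < real (X m)}"]
    by (intro divide_right_mono) (simp only: of_nat_add[symmetric] of_nat_le_iff, simp)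
  also have "\<dots> = real (card {m \<in> ?A. E1 m}) / real (card ?A) + real (card {m \<in> ?A. K < real (X m)}) / real (card ?A)"
    by (simp add: add_divide_distrib)
  also have "\<dots> \<le> (\<Sum>w\<in>{w. w < n \<and> T < d w}. real (d w) ^ 2) / ((real l - 1) * (1 - \<rho>))
        + real l * real T / (K * (real l - 1) * (1 - \<rho>)^2)"
    using E1b Xb by simp
  finally show ?thesis .
qed



lemma pmf_sums:
  fixes p :: "nat pmf" and f :: "nat \<Rightarrow> real"
  assumes "integrable (measure_pmf p) f"
  shows "(\<lambda>k. pmf p k * f k) sums measure_pmf.expectation p f"
proof -
  have i: "integrable (count_space UNIV) (\<lambda>k. pmf p k *\<^sub>R f k)"
    using assms unfolding measure_pmf_eq_density
    by (subst (asm) integrable_density) (auto simp: pmf_nonneg)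
  have "measure_pmf.expectation p f = integral\<^sup>L (count_space UNIV) (\<lambda>k. pmf p k *\<^sub>R f k)"
    unfolding measure_pmf_eq_density by (subst integral_density) (auto simp: pmf_nonneg)
  then show ?thesis using sums_integral_count_space_nat[OF i] by simp
qed

lemma regroup:
  fixes g :: "nat \<Rightarrow> real" and d :: "nat \<Rightarrow> nat"
  shows "(\<Sum>v\<in>{v. v < n \<and> d v < K}. g (d v)) = (\<Sum>k<K. g k * real (card {v. v < n \<and> d v = k}))"
proof -
  have "(\<Sum>v\<in>{v. v < n \<and> d v < K}. g (d v)) = (\<Sum>k<K. \<Sum>v\<in>{x. x \<in> {v. v < n \<and> d v < K} \<and> d x = k}. g (d v))"
    by (rule sum.group[symmetric]) auto
  also have "\<dots> = (\<Sum>k<K. g k * real (card {v. v < n \<and> d v = k}))"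
  proof (rule sum.cong[OF refl])
    fix k assume k: "k \<in> {..<K}"
    have "{x. x \<in> {v. v < n \<and> d v < K} \<and> d x = k} = {v. v < n \<and> d v = k}" using k by auto
    then show "(\<Sum>v\<in>{x. x \<in> {v. v < n \<and> d v < K} \<and> d x = k}. g (d v)) = g k * real (card {v. v < n \<and> d v = k})"
      by simp
  qed
  finally show ?thesis .
qed

lemma finite_sum_lim:
  fixes d :: "nat \<Rightarrow> nat \<Rightarrow> nat" and g :: "nat \<Rightarrow> real"
  assumes CA: "\<And>k. (\<lambda>n. real (card {v. v < n \<and> d n v = k}) / real n) \<longlonglongrightarrow> pmf p k"
  shows "(\<lambda>n. (\<Sum>v\<in>{v. v < n \<and> d n v < K}. g (d n v)) / real n) \<longlonglongrightarrow> (\<Sum>k<K. g k * pmf p k)"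
proof -
  have "(\<lambda>n. \<Sum>k<K. g k * (real (card {v. v < n \<and> d n v = k}) / real n)) \<longlonglongrightarrow> (\<Sum>k<K. g k * pmf p k)"
    by (intro tendsto_sum tendsto_mult_left CA)
  moreover have "(\<Sum>v\<in>{v. v < n \<and> d n v < K}. g (d n v)) / real n = (\<Sum>k<K. g k * (real (card {v. v < n \<and> d n v = k}) / real n))" for n
    unfolding regroup by (simp add: sum_divide_distrib)
  ultimately show ?thesis by simp
qed


lemma F_ineq:
  fixes S l nn S2 \<eta> lp \<rho> :: real
  assumes lp: "lp > 0" and eta: "\<eta> > 0" and l: "l \<ge> lp * nn" and S: "S \<le> (S2 + \<eta>/8) * nn"
    and nn: "nn \<ge> 24 / \<eta>" and l3: "l \<ge> 3" and r0: "\<rho> \<ge> (S2 + \<eta>/4) / lp - 1" and r1: "\<rho> < 1"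
    and s2: "S2 + \<eta>/4 \<ge> 0"
  shows "S - l \<le> \<rho> * (l - 3)"
proof -
  define r where "r = (S2 + \<eta>/4) / lp - 1"
  have r1': "r < 1" using r0 r1 r_def by simp
  have "r * (l - 3) \<le> \<rho> * (l - 3)" using r0 l3 r_def by (intro mult_right_mono) auto
  moreover have "r * (l - 3) = (S2 + \<eta>/4) * (l / lp) - l - 3 * r" unfolding r_def using lp by (simp add: field_simps)
  moreover have "(S2 + \<eta>/4) * (l / lp) \<ge> (S2 + \<eta>/4) * nn"
  proof (rule mult_left_mono[OF _ s2])
    show "nn \<le> l / lp" using l lp by (simp add: le_divide_eq mult.commute)
  qed
  moreover have "(\<eta>/8) * nn \<ge> 3"
  proof -
    have "(\<eta>/8) * nn \<ge> (\<eta>/8) * (24 / \<eta>)" using nn eta by (intro mult_left_mono) auto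
    then show ?thesis using eta by simp
  qed
  ultimately show ?thesis using S r1' by (simp add: algebra_simps)
qed

lemma fdeg_real: "real (fdeg d v) = real (d v) ^ 2 - real (d v)"
  unfolding fdeg_def by (cases "d v") (auto simp: power2_eq_square algebra_simps)

lemma powr_large:
  fixes \<alpha> C :: real assumes "\<alpha> > 0"
  shows "eventually (\<lambda>n. real n powr \<alpha> > C) sequentially"
proof -
  define C' where "C' = max C 0 + 1"
  have C': "C' > 0" "C < C'" unfolding C'_def by auto
  obtain N :: nat where N: "real N > C' powr (1 / \<alpha>)" using reals_Archimedean2 by blast
  have "real n powr \<alpha> > C" if "n \<ge> N" for n
  proof -
    have "C' powr (1 / \<alpha>) < real n" using N that by linarith
    then have "(C' powr (1 / \<alpha>)) powr \<alpha> < real n powr \<alpha>" using assms by (intro powr_less_mono2) auto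
    moreover have "(C' powr (1 / \<alpha>)) powr \<alpha> = C'" using assms C' by (simp add: powr_powr)
    ultimately show ?thesis using C' by simp
  qed
  then show ?thesis unfolding eventually_sequentially by blast
qed

theorem proposition2:
  fixes d :: "nat \<Rightarrow> nat \<Rightarrow> nat" and p :: "nat pmf" and \<gamma> :: real
  assumes even: "\<And>n. even (\<Sum>v<n. d n v)"
    and CA_dist: "\<And>k. (\<lambda>n. real (card {v. v < n \<and> d n v = k}) / real n) \<longlonglongrightarrow> pmf p k"
    and CA_int: "integrable (measure_pmf p) (\<lambda>k. real k ^ 2)"
    and CA_mom: "(\<lambda>n. (\<Sum>v<n. real (d n v) ^ 2) / real n)
                   \<longlonglongrightarrow> measure_pmf.expectation p (\<lambda>k. real k ^ 2)"
    and lam_pos: "0 < measure_pmf.expectation p real"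
    and nu_pos: "0 < measure_pmf.expectation p (\<lambda>k. real k * (real k - 1))
                        / measure_pmf.expectation p real"
    and nu_lt1: "measure_pmf.expectation p (\<lambda>k. real k * (real k - 1))
                        / measure_pmf.expectation p real < 1"
    and gamma_pos: "\<gamma> > 0"
    and tail: "(\<lambda>k. pmf p k) \<in> O(\<lambda>k. exp (- \<gamma> * real k))"
  shows "\<forall>\<alpha>::real. 0 < \<alpha> \<and> \<alpha> < 1 \<longrightarrow>
           (\<forall>\<epsilon>>0. \<exists>M N. \<forall>n\<ge>N.
              measure_pmf.prob (CM n (d n))
                {m. \<bar>real (B n (d n) m) / real n powr \<alpha>\<bar> > M} < \<epsilon>)"
proof (intro allI impI)
  fix \<alpha> :: real and \<epsilon> :: real
  assume \<alpha>: "0 < \<alpha> \<and> \<alpha> < 1" and \<epsilon>: "\<epsilon> > 0"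
  define lam where "lam = measure_pmf.expectation p real"
  define S2 where "S2 = measure_pmf.expectation p (\<lambda>k. real k ^ 2)"
  have meas: "f \<in> borel_measurable (measure_pmf p)" for f :: "nat \<Rightarrow> real"
    by (auto simp: measurable_def)
  have int1: "integrable (measure_pmf p) real"
  proof (rule Bochner_Integration.integrable_bound[OF CA_int meas])
    show "AE x in measure_pmf p. norm (real x) \<le> norm (real x ^ 2)"
    proof (intro AE_I2)
      fix x :: nat
      have "x \<le> x * x" by (rule le_square)
      then have "real x \<le> real x * real x" by (metis of_nat_le_iff of_nat_mult)
      then show "norm (real x) \<le> norm (real x ^ 2)" by (simp add: power2_eq_square)
    qed
  qed
  have Qeq: "measure_pmf.expectation p (\<lambda>k. real k * (real k - 1)) = S2 - lam"
  proof -
    have "measure_pmf.expectation p (\<lambda>k. real k * (real k - 1)) = measure_pmf.expectation p (\<lambda>k. real k ^ 2 - real k)"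
      by (simp add: power2_eq_square algebra_simps)
    also have "\<dots> = S2 - lam" unfolding S2_def lam_def using CA_int int1 by simp
    finally show ?thesis .
  qed
  have lam0: "lam > 0" using lam_pos lam_def by simp
  have S2lt: "S2 < 2 * lam"
  proof -
    have "(S2 - lam) / lam < 1" using nu_lt1 Qeq lam_def by simp
    then show ?thesis using lam0 by (simp add: divide_less_eq)
  qed
  have S2nn: "S2 \<ge> 0" unfolding S2_def by (rule integral_nonneg_AE) simp
  define \<eta> where "\<eta> = 2 * lam - S2"
  have eta: "\<eta> > 0" using S2lt \<eta>_def by simp
  define lp where "lp = lam - \<eta> / 8"
  have lp: "lp > 0" "lp < lam" using lam0 S2nn eta unfolding lp_def \<eta>_def by auto
  define \<rho> where "\<rho> = max 0 ((S2 + \<eta>/4) / lp - 1)"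
  have rho: "0 \<le> \<rho>" "\<rho> < 1" "\<rho> \<ge> (S2 + \<eta>/4) / lp - 1"
  proof -
    have "S2 + \<eta>/4 < 2 * lp" unfolding lp_def \<eta>_def using S2lt by (simp add: field_simps)
    then have "(S2 + \<eta>/4) / lp < 2" using lp by (simp add: divide_less_eq)
    then show "0 \<le> \<rho>" "\<rho> < 1" "\<rho> \<ge> (S2 + \<eta>/4) / lp - 1" unfolding \<rho>_def by auto
  qed
  have ev1: "eventually (\<lambda>n. real (\<Sum>v<n. d n v) \<ge> lp * real n) sequentially"
  proof -
    have "(\<lambda>K. \<Sum>k<K. pmf p k * real k) \<longlonglongrightarrow> lam"
      using pmf_sums[OF int1] unfolding lam_def sums_def .
    then have "eventually (\<lambda>K. (\<Sum>k<K. pmf p k * real k) > lp) sequentially"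
      using lp(2) by (rule order_tendstoD)
    then obtain K0 where K0: "(\<Sum>k<K0. pmf p k * real k) > lp" unfolding eventually_sequentially by blast
    have "(\<lambda>n. (\<Sum>v\<in>{v. v < n \<and> d n v < K0}. real (d n v)) / real n) \<longlonglongrightarrow> (\<Sum>k<K0. real k * pmf p k)"
      by (rule finite_sum_lim[OF CA_dist])
    moreover have "(\<Sum>k<K0. real k * pmf p k) > lp" using K0 by (simp add: mult.commute)
    ultimately have "eventually (\<lambda>n. (\<Sum>v\<in>{v. v < n \<and> d n v < K0}. real (d n v)) / real n > lp) sequentially"
      by (rule order_tendstoD)
    moreover have "eventually (\<lambda>n. n > 0) sequentially" by (rule eventually_gt_at_top)
    ultimately show ?thesis
    proof (rule eventually_elim2)
      fix n :: nat assume a: "(\<Sum>v\<in>{v. v < n \<and> d n v < K0}. real (d n v)) / real n > lp" and n: "n > 0"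
      have "(\<Sum>v\<in>{v. v < n \<and> d n v < K0}. real (d n v)) \<le> (\<Sum>v<n. real (d n v))"
        by (rule sum_mono2) auto
      moreover have "lp * real n < (\<Sum>v\<in>{v. v < n \<and> d n v < K0}. real (d n v))" using a n by (simp add: field_simps)
      ultimately show "real (\<Sum>v<n. d n v) \<ge> lp * real n" by simp
    qed
  qed
  have ev2: "eventually (\<lambda>n. (\<Sum>v<n. real (d n v) ^ 2) / real n < S2 + \<eta>/8) sequentially"
    using CA_mom eta unfolding S2_def by (intro order_tendstoD(2)) auto
  define \<delta> where "\<delta> = \<epsilon> * lp * (1 - \<rho>) / 8"
  have delta: "\<delta> > 0" unfolding \<delta>_def using \<epsilon> lp rho by simp
  obtain T where ev3: "eventually (\<lambda>n. (\<Sum>w\<in>{w. w < n \<and> T < d n w}. real (d n w) ^ 2) \<le> \<delta> * real n) sequentially"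
  proof -
    have "(\<lambda>K. \<Sum>k<K. pmf p k * real k ^ 2) \<longlonglongrightarrow> S2"
      using pmf_sums[OF CA_int] unfolding S2_def sums_def .
    then have "eventually (\<lambda>K. (\<Sum>k<K. pmf p k * real k ^ 2) > S2 - \<delta>/3) sequentially"
      using delta by (intro order_tendstoD(1)) auto
    then obtain K1 where K1: "\<And>K. K \<ge> K1 \<Longrightarrow> (\<Sum>k<K. pmf p k * real k ^ 2) > S2 - \<delta>/3"
      unfolding eventually_sequentially by blast
    have lim: "(\<lambda>n. (\<Sum>v\<in>{v. v < n \<and> d n v < Suc K1}. real (d n v) ^ 2) / real n) \<longlonglongrightarrow> (\<Sum>k<Suc K1. real k ^ 2 * pmf p k)"
      by (rule finite_sum_lim[OF CA_dist])
    have "(\<Sum>k<Suc K1. real k ^ 2 * pmf p k) > S2 - \<delta>/3" using K1[of "Suc K1"] by (simp add: mult.commute)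
    then have "S2 - 2 * \<delta> / 3 < (\<Sum>k<Suc K1. real k ^ 2 * pmf p k)" using delta by simp
    from order_tendstoD(1)[OF lim this]
    have e1: "eventually (\<lambda>n. (\<Sum>v\<in>{v. v < n \<and> d n v < Suc K1}. real (d n v) ^ 2) / real n > S2 - 2 * \<delta> / 3) sequentially" .
    have e2: "eventually (\<lambda>n. (\<Sum>v<n. real (d n v) ^ 2) / real n < S2 + \<delta>/3) sequentially"
      using CA_mom delta unfolding S2_def by (intro order_tendstoD(2)) auto
    have e3: "eventually (\<lambda>n. n > 0) sequentially" by (rule eventually_gt_at_top)
    have "eventually (\<lambda>n. (\<Sum>w\<in>{w. w < n \<and> K1 < d n w}. real (d n w) ^ 2) \<le> \<delta> * real n) sequentially"
      using e1 e2 e3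
    proof (eventually_elim)
      case (elim n)
      have part: "{..<n} = {v. v < n \<and> d n v < Suc K1} \<union> {w. w < n \<and> K1 < d n w}" by auto
      have "(\<Sum>v<n. real (d n v) ^ 2) = (\<Sum>v\<in>{v. v < n \<and> d n v < Suc K1}. real (d n v) ^ 2) + (\<Sum>w\<in>{w. w < n \<and> K1 < d n w}. real (d n w) ^ 2)"
        unfolding part by (rule sum.union_disjoint) auto
      moreover have "(\<Sum>v<n. real (d n v) ^ 2) < (S2 + \<delta>/3) * real n" using elim by (simp add: field_simps)
      moreover have "(\<Sum>v\<in>{v. v < n \<and> d n v < Suc K1}. real (d n v) ^ 2) > (S2 - 2 * \<delta> / 3) * real n"
        using elim by (simp add: field_simps)
      ultimately show ?case by (simp add: algebra_simps)
    qed
    then show ?thesis by (rule that)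
  qed
  have ev4: "eventually (\<lambda>n. real n powr \<alpha> > 8 * real T / (\<epsilon> * (1 - \<rho>)^2)) sequentially"
    using \<alpha> by (intro powr_large) simp
  have ev5: "eventually (\<lambda>n. real n \<ge> max (24 / \<eta>) (3 / lp)) sequentially"
  proof -
    obtain N :: nat where N: "real N \<ge> max (24 / \<eta>) (3 / lp)" using real_arch_simple by blast
    show ?thesis
    proof (rule eventually_sequentiallyI[of N])
      fix n assume "N \<le> n" then have "real N \<le> real n" by simp
      then show "real n \<ge> max (24 / \<eta>) (3 / lp)" using N by linarith
    qed
  qed
  have "eventually (\<lambda>n. measure_pmf.prob (CM n (d n)) {m. \<bar>real (B n (d n) m) / real n powr \<alpha>\<bar> > 1} < \<epsilon>) sequentially"
    using ev1 ev2 ev3 ev4 ev5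
  proof (eventually_elim)
    case (elim n)
    define l where "l = card (half_edges n (d n))"
    have lsum: "l = (\<Sum>v<n. d n v)" unfolding l_def by (rule half_edges_card)
    have nlarge: "real n \<ge> 24 / \<eta>" "real n \<ge> 3 / lp" using elim(5) by auto
    have "3 / lp > 0" using lp by simp
    then have npos: "real n > 0" using nlarge(2) by linarith
    have lge: "real l \<ge> lp * real n" using elim(1) lsum by simp
    have lpn: "lp * real n \<ge> 3" using nlarge(2) lp by (simp add: divide_le_eq mult.commute)
    have l3: "real l \<ge> 3" using lge lpn by simp
    have l2: "l \<ge> 2" using l3 by simp
    have ev: "even l" using even lsum by simp
    have Ssum: "real (\<Sum>v<n. fdeg (d n) v) = (\<Sum>v<n. real (d n v) ^ 2) - real l"
      unfolding lsum by (simp add: fdeg_real sum_subtractf)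
    have S2b: "(\<Sum>v<n. real (d n v) ^ 2) \<le> (S2 + \<eta>/8) * real n"
      using elim(2) npos by (simp add: divide_less_eq less_imp_le)
    have F: "real (\<Sum>v<n. fdeg (d n) v) \<le> \<rho> * (real l - 3)"
      unfolding Ssum
      by (rule F_ineq[OF lp(1) eta lge S2b nlarge(1) l3 rho(3) rho(2)]) (use S2nn eta in simp)
    define K where "K = real n powr \<alpha>"
    have Kpos: "K > 0" unfolding K_def using npos by simp
    have setq: "{m. \<bar>real (B n (d n) m) / real n powr \<alpha>\<bar> > 1} = {m. K < real (B n (d n) m)}"
      using Kpos unfolding K_def by (auto simp: less_divide_eq)
    have mb: "measure_pmf.prob (CM n (d n)) {m. K < real (B n (d n) m)}
       \<le> (\<Sum>w\<in>{w. w < n \<and> T < d n w}. real (d n w) ^ 2) / ((real l - 1) * (1 - \<rho>))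
          + real l * real T / (K * (real l - 1) * (1 - \<rho>)^2)"
      unfolding l_def by (rule main_bound[OF ev[unfolded l_def] l2[unfolded l_def] rho(1,2) F[unfolded l_def] Kpos])
    have l1: "real l - 1 \<ge> lp * real n / 2" using lge lpn by simp
    have l1': "real l - 1 \<ge> real l / 2" using l3 by simp
    have t1: "(\<Sum>w\<in>{w. w < n \<and> T < d n w}. real (d n w) ^ 2) / ((real l - 1) * (1 - \<rho>)) \<le> \<epsilon> / 4"
    proof -
      have "(\<Sum>w\<in>{w. w < n \<and> T < d n w}. real (d n w) ^ 2) / ((real l - 1) * (1 - \<rho>))
          \<le> (\<delta> * real n) / ((lp * real n / 2) * (1 - \<rho>))"
        using elim(3) l1 rho lp npos delta
        by (intro frac_le mult_right_mono mult_pos_pos) auto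
      also have "\<dots> = \<epsilon> / 4" unfolding \<delta>_def using npos lp rho by (simp add: field_simps)
      finally show ?thesis .
    qed
    have t2: "real l * real T / (K * (real l - 1) * (1 - \<rho>)^2) < \<epsilon> / 4"
    proof -
      have r2: "(1 - \<rho>)^2 > 0" using rho by simp
      have "real l * real T / (K * (real l - 1) * (1 - \<rho>)^2) \<le> real l * real T / (K * (real l / 2) * (1 - \<rho>)^2)"
        using l1' l3 Kpos r2 by (intro divide_left_mono mult_right_mono mult_left_mono mult_pos_pos) auto
      also have "\<dots> = 2 * real T / (K * (1 - \<rho>)^2)" using l3 by (simp add: field_simps)
      also have "\<dots> < \<epsilon> / 4"
      proof -
        have "8 * real T / (\<epsilon> * (1 - \<rho>)^2) < K" using elim(4) K_def by simp
        then have "8 * real T < K * (\<epsilon> * (1 - \<rho>)^2)" using \<epsilon> r2 by (simp add: divide_less_eq)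
        then show ?thesis using Kpos r2 \<epsilon> by (simp add: divide_less_eq field_simps)
      qed
      finally show ?thesis .
    qed
    show ?case unfolding setq using mb t1 t2 \<epsilon> by linarith
  qed
  then obtain N where "\<forall>n\<ge>N. measure_pmf.prob (CM n (d n)) {m. \<bar>real (B n (d n) m) / real n powr \<alpha>\<bar> > 1} < \<epsilon>"
    unfolding eventually_sequentially by blast
  then show "\<exists>M N. \<forall>n\<ge>N. measure_pmf.prob (CM n (d n)) {m. \<bar>real (B n (d n) m) / real n powr \<alpha>\<bar> > M} < \<epsilon>"
    by blast
qed


end
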